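(* Let $d,h\ge1$, $1/2<\alpha\le1$, and let $\mathbf{x}:[0,1]\to\mathbb{R}^h$ satisfy $|\mathbf{x}(t)-\mathbf{x}(s)|\le C_\alpha|t-s|^\alpha$ for some $C_\alpha\in(0,\infty)$. Let $\mathbf{f}=[f_{ij}]:\mathbb{R}^d\to\mathbb{R}^{d\times h}$ with each $f_{ij}\in C^2(\mathbb{R}^d)$ and $\max\{|\mathbf{f}|,|\nabla\mathbf{f}|,|\nabla^2\mathbf{f}|\}<\infty$. Then a solution $\mathbf{y}$ of $\mathbf{y}(t)=\mathbf{y}_0+\int_0^t\mathbf{f}(\mathbf{y}(s))\,d\mathbf{x}(s)$, $t\in[0,1]$ (Young integral), exists, and for all $0\le s<t\le1$, $$|\mathbf{y}(s)-\mathbf{y}(t)|\le G_1^*|s-t|^\alpha,\qquad |\mathbf{y}(t)-\mathbf{y}(s)-\mathbf{f}(\mathbf{y}(s))(\mathbf{x}(t)-\mathbf{x}(s))|\le G_2^*|s-t|^{2\alpha}.$$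
   Context: For a vector or matrix, $|\cdot|$ denotes the maximum absolute value of its entries; $|\mathbf{f}|=\max_{ij}\sup|f_{ij}|$, $|\nabla\mathbf{f}|=\max_{ij}\sup|\nabla f_{ij}|$, $|\nabla^2\mathbf{f}|=\max_{ij}\sup|\nabla^2f_{ij}|$. $K(2\alpha)=1+\sum_{n\ge1}n^{-2\alpha}$. $G_1^*=2h\lceil(2dhC_\alpha K(2\alpha)|\nabla\mathbf{f}|)^{1/\alpha}\rceil^{1-\alpha}|\mathbf{f}|C_\alpha$, $G_2^*=dhK(2\alpha)|\nabla\mathbf{f}|C_\alpha G_1^*$. The Young integral is the limit of Riemann sums $\sum v(t_i)(u(t_{i+1})-u(t_i))$ as the partition mesh tends to $0$. *)

theory Defs
  imports "HOL-Analysis.Analysis"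
begin

definition maxabs :: "real ^ 'n \<Rightarrow> real" where
  "maxabs v = Max (range (\<lambda>i. \<bar>v $ i\<bar>))"

definition fine_partition :: "real \<Rightarrow> real \<Rightarrow> real \<Rightarrow> nat \<Rightarrow> (nat \<Rightarrow> real) \<Rightarrow> bool" where
  "fine_partition a b \<delta> n p \<longleftrightarrow> p 0 = a \<and> p n = b \<and>
     (\<forall>i<n. p i < p (Suc i) \<and> p (Suc i) - p i < \<delta>)"

definition has_young_integral ::
  "(real \<Rightarrow> real ^ 'h ^ 'd) \<Rightarrow> (real \<Rightarrow> real ^ 'h) \<Rightarrow> real \<Rightarrow> real \<Rightarrow> real ^ 'd \<Rightarrow> bool" where
  "has_young_integral v u a b I \<longleftrightarrow>
     (\<forall>\<epsilon>>0. \<exists>\<delta>>0. \<forall>n p. fine_partition a b \<delta> n p \<longrightarrow>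
        maxabs ((\<Sum>i<n. v (p i) *v (u (p (Suc i)) - u (p i))) - I) < \<epsilon>)"

definition Kconst :: "real \<Rightarrow> real" where
  "Kconst \<beta> = 1 + (\<Sum>n. 1 / (real (Suc n)) powr \<beta>)"

end

theory Submission
  imports Defs "HOL-Library.Diagonal_Subsequence"
begin


lemma maxabs_ge: "\<bar>v $ i\<bar> \<le> maxabs (v :: real ^ 'n)"
  unfolding maxabs_def by (rule Max_ge) auto

lemma maxabs_le: "(\<And>i. \<bar>(v :: real ^ 'n) $ i\<bar> \<le> c) \<Longrightarrow> maxabs v \<le> c"
  unfolding maxabs_def by (subst Max_le_iff) auto

lemma maxabs_nonneg: "0 \<le> maxabs (v :: real ^ 'n)"
  using maxabs_ge[of v undefined] by linarith

lemma maxabs_triangle: "maxabs ((u::real^'n) + v) \<le> maxabs u + maxabs v"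
  by (rule maxabs_le) (smt (verit) maxabs_ge vector_add_component)

lemma maxabs_diff_triangle: "maxabs ((u::real^'n) - v) \<le> maxabs u + maxabs v"
  by (rule maxabs_le) (smt (verit) maxabs_ge vector_minus_component)

lemma maxabs_commute: "maxabs ((u::real^'n) - v) = maxabs (v - u)"
  unfolding maxabs_def by (simp add: abs_minus_commute)

lemma maxabs_sum: "maxabs (\<Sum>k\<in>S. (u k :: real^'n)) \<le> (\<Sum>k\<in>S. maxabs (u k))"
proof (rule maxabs_le)
  fix i
  have "\<bar>(\<Sum>k\<in>S. u k) $ i\<bar> = \<bar>\<Sum>k\<in>S. u k $ i\<bar>" by (simp add: sum_component)
  also have "\<dots> \<le> (\<Sum>k\<in>S. \<bar>u k $ i\<bar>)" by (rule sum_abs)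
  also have "\<dots> \<le> (\<Sum>k\<in>S. maxabs (u k))" by (rule sum_mono) (rule maxabs_ge)
  finally show "\<bar>(\<Sum>k\<in>S. u k) $ i\<bar> \<le> (\<Sum>k\<in>S. maxabs (u k))" .
qed

lemma maxabs_mv:
  fixes A :: "real ^ 'h ^ 'd"
  assumes "\<And>i j. \<bar>A $ i $ j\<bar> \<le> c"
  shows "maxabs (A *v v) \<le> real CARD('h) * c * maxabs v"
proof (rule maxabs_le)
  fix i
  have "\<bar>(A *v v) $ i\<bar> = \<bar>\<Sum>j\<in>UNIV. A $ i $ j * v $ j\<bar>" by (simp add: matrix_vector_mult_def)
  also have "\<dots> \<le> (\<Sum>j\<in>UNIV. \<bar>A $ i $ j\<bar> * \<bar>v $ j\<bar>)" by (rule order_trans[OF sum_abs]) (simp add: abs_mult)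
  also have "\<dots> \<le> (\<Sum>j\<in>(UNIV::'h set). c * maxabs v)"
    by (rule sum_mono) (intro mult_mono assms maxabs_ge; simp add: maxabs_nonneg order_trans[OF abs_ge_zero assms])
  also have "\<dots> = real CARD('h) * c * maxabs v" by simp
  finally show "\<bar>(A *v v) $ i\<bar> \<le> real CARD('h) * c * maxabs v" .
qed

lemma norm_le_maxabs: "norm (v :: real^'n) \<le> real CARD('n) * maxabs v"
proof -
  have "norm v \<le> (\<Sum>i\<in>UNIV. \<bar>v $ i\<bar>)" by (rule norm_le_l1_cart)
  also have "\<dots> \<le> (\<Sum>i\<in>(UNIV::'n set). maxabs v)" by (rule sum_mono) (rule maxabs_ge)
  finally show ?thesis by simp
qed

definition idx :: "nat \<Rightarrow> nat \<Rightarrow> nat" where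
  "idx i k = (if k < i then k else Suc k)"

definition rem :: "(nat \<Rightarrow> 'a) \<Rightarrow> nat \<Rightarrow> nat \<Rightarrow> 'a" where
  "rem F i k = F (idx i k)"

lemma rem_sum:
  fixes G X :: "nat \<Rightarrow> real"
  assumes "Suc j \<le> n"
  shows "(\<Sum>k<Suc n. G k * (X (Suc k) - X k)) =
     (\<Sum>k<n. rem G (Suc j) k * (rem X (Suc j) (Suc k) - rem X (Suc j) k))
      + (G (Suc j) - G j) * (X (Suc (Suc j)) - X (Suc j))"
  using assms
proof (induction n rule: dec_induct)
  case base
  have e: "(\<Sum>k<Suc j. rem G (Suc j) k * (rem X (Suc j) (Suc k) - rem X (Suc j) k))
     = (\<Sum>k<j. G k * (X (Suc k) - X k)) + G j * (X (Suc (Suc j)) - X j)"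
    by (simp add: rem_def idx_def)
  show ?case unfolding e by (simp add: algebra_simps)
next
  case (step m)
  then show ?case by (simp add: rem_def idx_def)
qed

lemma part_mono:
  fixes p :: "nat \<Rightarrow> real"
  assumes "\<forall>k<n. p k < p (Suc k)" "a \<le> b" "b \<le> n"
  shows "p a \<le> p b"
  using assms(2,3)
proof (induction b rule: dec_induct)
  case base then show ?case by simp
next
  case (step m)
  have "p m < p (Suc m)" using assms(1,3) step.hyps(2) by simp
  moreover have "p a \<le> p m" using step.IH step.hyps(2) assms(3) by simp
  ultimately show ?case by linarith
qed

lemma part_strict:
  fixes p :: "nat \<Rightarrow> real"
  assumes "\<forall>k<n. p k < p (Suc k)" "a < b" "b \<le> n"
  shows "p a < p b"
proof -
  have "p a < p (Suc a)" using assms by auto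
  also have "p (Suc a) \<le> p b" using part_mono[OF assms(1)] assms by auto
  finally show ?thesis .
qed

lemma exists_small:
  fixes w :: "nat \<Rightarrow> real"
  assumes "(\<Sum>j<m. w j) \<le> c" "0 < m"
  shows "\<exists>j<m. real m * w j \<le> c"
proof (rule ccontr)
  assume "\<not> ?thesis"
  then have "\<forall>j<m. c < real m * w j" by auto
  then have "(\<Sum>j<m. c) < (\<Sum>j<m. real m * w j)"
    using assms(2) by (intro sum_strict_mono) auto
  also have "\<dots> = real m * (\<Sum>j<m. w j)" by (simp add: sum_distrib_left)
  also have "\<dots> \<le> real m * c" using assms by (intro mult_left_mono) auto
  finally show False by simp
qed

lemma dyl_scalar:
  fixes G X p :: "nat \<Rightarrow> real"
  assumes al: "0 < \<alpha>" and Cg: "0 \<le> Cg" and Cx: "0 \<le> Cx"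
    and inc: "\<forall>k<n. p k < p (Suc k)"
    and HG: "\<forall>a\<le>n. \<forall>b\<le>n. \<bar>G a - G b\<bar> \<le> Cg * \<bar>p a - p b\<bar> powr \<alpha>"
    and HX: "\<forall>a\<le>n. \<forall>b\<le>n. \<bar>X a - X b\<bar> \<le> Cx * \<bar>p a - p b\<bar> powr \<alpha>"
  shows "\<bar>(\<Sum>k<n. G k * (X (Suc k) - X k)) - G 0 * (X n - X 0)\<bar>
     \<le> Cg * Cx * (p n - p 0) powr (2*\<alpha>) * (\<Sum>m<n-1. 1 / real (Suc m) powr (2*\<alpha>))"
  using inc HG HX
proof (induction n arbitrary: G X p rule: less_induct)
  case (less n)
  show ?case
  proof (cases "n \<le> 1")
    case True
    then have "n = 0 \<or> n = 1" by auto
    then show ?thesis by auto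
  next
    case False
    then obtain n1 where n1: "n = Suc n1" by (cases n) auto
    with False have "1 \<le> n1" by simp
    note 3 = n1 this
    define T where "T = p n - p 0"
    have T0: "0 \<le> T" unfolding T_def using part_mono[OF less.prems(1)] by auto
    have s1: "(\<Sum>j<n1. p (Suc j) - p j) \<le> T"
    proof -
      have "(\<Sum>j<n1. p (Suc j) - p j) = p n1 - p 0" by (rule sum_lessThan_telescope)
      also have "\<dots> \<le> T" unfolding T_def using part_mono[OF less.prems(1), of n1 n] 3 by auto
      finally show ?thesis .
    qed
    have s2: "(\<Sum>j<n1. p (Suc (Suc j)) - p (Suc j)) \<le> T"
    proof -
      have "(\<Sum>j<n1. p (Suc (Suc j)) - p (Suc j)) = p (Suc n1) - p 1"
        using sum_lessThan_telescope[of "\<lambda>j. p (Suc j)" n1] by simp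
      also have "\<dots> \<le> T" unfolding T_def using part_mono[OF less.prems(1), of 0 1] 3 by auto
      finally show ?thesis .
    qed
    have "(\<Sum>j<n1. p (Suc (Suc j)) - p j) \<le> 2 * T"
    proof -
      have "(\<Sum>j<n1. p (Suc (Suc j)) - p j) = (\<Sum>j<n1. p (Suc (Suc j)) - p (Suc j)) + (\<Sum>j<n1. p (Suc j) - p j)"
        by (simp add: sum.distrib[symmetric])
      then show ?thesis using s1 s2 by simp
    qed
    then obtain j where j: "j < n1" "real n1 * (p (Suc (Suc j)) - p j) \<le> 2 * T"
      using exists_small[of "\<lambda>j. p (Suc (Suc j)) - p j" n1 "2*T"] 3 by auto
    define G' where "G' = rem G (Suc j)"
    define X' where "X' = rem X (Suc j)"
    define p' where "p' = rem p (Suc j)"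
    have idx_le: "a \<le> n1 \<Longrightarrow> idx (Suc j) a \<le> n" for a using 3 by (simp add: idx_def)
    have inc': "\<forall>k<n1. p' k < p' (Suc k)"
    proof (intro allI impI)
      fix k assume k: "k < n1"
      have "idx (Suc j) k < idx (Suc j) (Suc k)" by (simp add: idx_def)
      moreover have "idx (Suc j) (Suc k) \<le> n" using k idx_le by simp
      ultimately show "p' k < p' (Suc k)" unfolding p'_def rem_def
        by (rule part_strict[OF less.prems(1)])
    qed
    have HG': "\<forall>a\<le>n1. \<forall>b\<le>n1. \<bar>G' a - G' b\<bar> \<le> Cg * \<bar>p' a - p' b\<bar> powr \<alpha>"
    proof (intro allI impI)
      fix a b assume "a \<le> n1" "b \<le> n1"
      then show "\<bar>G' a - G' b\<bar> \<le> Cg * \<bar>p' a - p' b\<bar> powr \<alpha>"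
        unfolding G'_def p'_def rem_def by (rule less.prems(2)[rule_format, OF idx_le idx_le])
    qed
    have HX': "\<forall>a\<le>n1. \<forall>b\<le>n1. \<bar>X' a - X' b\<bar> \<le> Cx * \<bar>p' a - p' b\<bar> powr \<alpha>"
    proof (intro allI impI)
      fix a b assume "a \<le> n1" "b \<le> n1"
      then show "\<bar>X' a - X' b\<bar> \<le> Cx * \<bar>p' a - p' b\<bar> powr \<alpha>"
        unfolding X'_def p'_def rem_def by (rule less.prems(3)[rule_format, OF idx_le idx_le])
    qed
    have IH: "\<bar>(\<Sum>k<n1. G' k * (X' (Suc k) - X' k)) - G' 0 * (X' n1 - X' 0)\<bar>
     \<le> Cg * Cx * (p' n1 - p' 0) powr (2*\<alpha>) * (\<Sum>m<n1-1. 1 / real (Suc m) powr (2*\<alpha>))"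
      using less.IH[OF _ inc' HG' HX'] 3 by simp
    have ends: "G' 0 = G 0" "X' 0 = X 0" "p' 0 = p 0" "X' n1 = X n" "p' n1 = p n"
      using j 3 by (auto simp: G'_def X'_def p'_def rem_def idx_def)
    have split: "(\<Sum>k<n. G k * (X (Suc k) - X k)) = (\<Sum>k<n1. G' k * (X' (Suc k) - X' k))
       + (G (Suc j) - G j) * (X (Suc (Suc j)) - X (Suc j))"
      unfolding G'_def X'_def using rem_sum[of j n1 G X] j 3 by simp
    define a where "a = p (Suc j) - p j"
    define b where "b = p (Suc (Suc j)) - p (Suc j)"
    have a0: "0 \<le> a" and b0: "0 \<le> b" unfolding a_def b_def using less.prems(1) j 3 by (auto simp: less_imp_le)
    have hg: "\<bar>G (Suc j) - G j\<bar> \<le> Cg * a powr \<alpha>"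
      using less.prems(2)[rule_format, of "Suc j" j] j 3 a0 unfolding a_def by simp
    have hx: "\<bar>X (Suc (Suc j)) - X (Suc j)\<bar> \<le> Cx * b powr \<alpha>"
      using less.prems(3)[rule_format, of "Suc (Suc j)" "Suc j"] j 3 b0 unfolding b_def by simp
    have abe: "((a + b) / 2)^2 - a * b = ((a - b) / 2)^2" by (simp add: power2_eq_square field_simps)
    have ab: "a * b \<le> ((a + b) / 2)^2" using abe zero_le_power2[of "(a - b) / 2"] by linarith
    have n1pos: "0 < real n1" using 3 by simp
    have abT: "(a + b) / 2 \<le> T / real n1"
      using j(2) n1pos unfolding a_def b_def by (simp add: field_simps)
    have "a powr \<alpha> * b powr \<alpha> = (a * b) powr \<alpha>" using a0 b0 by (simp add: powr_mult)
    also have "\<dots> \<le> (((a + b) / 2)^2) powr \<alpha>" using ab a0 b0 al by (intro powr_mono2) auto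
    also have "\<dots> = ((a + b) / 2) powr (2 * \<alpha>)"
      using a0 b0 by (simp add: powr_powr[symmetric] powr_realpow)
    also have "\<dots> \<le> (T / real n1) powr (2 * \<alpha>)" using abT a0 b0 al by (intro powr_mono2) auto
    also have "\<dots> = T powr (2*\<alpha>) * (1 / real (Suc (n1 - 1)) powr (2*\<alpha>))"
      using 3 T0 by (simp add: powr_divide)
    finally have abb: "a powr \<alpha> * b powr \<alpha> \<le> T powr (2*\<alpha>) * (1 / real (Suc (n1 - 1)) powr (2*\<alpha>))" .
    have D: "\<bar>(G (Suc j) - G j) * (X (Suc (Suc j)) - X (Suc j))\<bar> \<le> Cg * Cx * (T powr (2*\<alpha>) * (1 / real (Suc (n1 - 1)) powr (2*\<alpha>)))"
    proof -
      have "\<bar>(G (Suc j) - G j) * (X (Suc (Suc j)) - X (Suc j))\<bar> \<le> (Cg * a powr \<alpha>) * (Cx * b powr \<alpha>)"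
        unfolding abs_mult by (intro mult_mono hg hx) (auto intro: mult_nonneg_nonneg Cg)
      also have "\<dots> = Cg * Cx * (a powr \<alpha> * b powr \<alpha>)" by simp
      also have "\<dots> \<le> Cg * Cx * (T powr (2*\<alpha>) * (1 / real (Suc (n1 - 1)) powr (2*\<alpha>)))"
        using abb Cg Cx by (intro mult_left_mono) auto
      finally show ?thesis .
    qed
    have sumsplit: "(\<Sum>m<n-1. 1 / real (Suc m) powr (2*\<alpha>)) = (\<Sum>m<n1-1. 1 / real (Suc m) powr (2*\<alpha>)) + 1 / real (Suc (n1 - 1)) powr (2*\<alpha>)"
    proof -
      have e: "n - 1 = Suc (n1 - 1)" using 3 by simp
      show ?thesis unfolding e by (simp only: sum.lessThan_Suc)
    qed
    have "\<bar>(\<Sum>k<n. G k * (X (Suc k) - X k)) - G 0 * (X n - X 0)\<bar>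
       \<le> \<bar>(\<Sum>k<n1. G' k * (X' (Suc k) - X' k)) - G' 0 * (X' n1 - X' 0)\<bar>
         + \<bar>(G (Suc j) - G j) * (X (Suc (Suc j)) - X (Suc j))\<bar>"
      unfolding split ends by linarith
    also have "\<dots> \<le> Cg * Cx * T powr (2*\<alpha>) * (\<Sum>m<n1-1. 1 / real (Suc m) powr (2*\<alpha>))
         + Cg * Cx * (T powr (2*\<alpha>) * (1 / real (Suc (n1 - 1)) powr (2*\<alpha>)))"
      using IH[unfolded ends] D unfolding T_def ends by linarith
    also have "\<dots> = Cg * Cx * T powr (2*\<alpha>) * (\<Sum>m<n-1. 1 / real (Suc m) powr (2*\<alpha>))"
      unfolding sumsplit by (simp add: algebra_simps)
    finally show ?thesis unfolding T_def .
  qed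
qed




lemma dyl_vec:
  fixes g :: "nat \<Rightarrow> real^'h^'d" and xx :: "nat \<Rightarrow> real^'h" and p :: "nat \<Rightarrow> real"
  assumes al: "0 < \<alpha>" and Cg: "0 \<le> Cg" and Cx: "0 \<le> Cx"
    and inc: "\<forall>k<n. p k < p (Suc k)"
    and HG: "\<forall>a\<le>n. \<forall>b\<le>n. \<forall>i j. \<bar>g a $ i $ j - g b $ i $ j\<bar> \<le> Cg * \<bar>p a - p b\<bar> powr \<alpha>"
    and HX: "\<forall>a\<le>n. \<forall>b\<le>n. maxabs (xx a - xx b) \<le> Cx * \<bar>p a - p b\<bar> powr \<alpha>"
  shows "maxabs ((\<Sum>k<n. g k *v (xx (Suc k) - xx k)) - g 0 *v (xx n - xx 0))
     \<le> real CARD('h) * (Cg * Cx * (p n - p 0) powr (2*\<alpha>) * (\<Sum>m<n-1. 1 / real (Suc m) powr (2*\<alpha>)))"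
proof (rule maxabs_le)
  fix i
  let ?B = "Cg * Cx * (p n - p 0) powr (2*\<alpha>) * (\<Sum>m<n-1. 1 / real (Suc m) powr (2*\<alpha>))"
  have e: "((\<Sum>k<n. g k *v (xx (Suc k) - xx k)) - g 0 *v (xx n - xx 0)) $ i
      = (\<Sum>j\<in>UNIV. (\<Sum>k<n. g k $ i $ j * (xx (Suc k) $ j - xx k $ j)) - g 0 $ i $ j * (xx n $ j - xx 0 $ j))"
    by (simp add: matrix_vector_mult_def sum_subtractf) (rule sum.swap)
  have b: "\<bar>(\<Sum>k<n. g k $ i $ j * (xx (Suc k) $ j - xx k $ j)) - g 0 $ i $ j * (xx n $ j - xx 0 $ j)\<bar> \<le> ?B" for j
  proof (rule dyl_scalar[OF al Cg Cx inc])
    show "\<forall>a\<le>n. \<forall>b\<le>n. \<bar>g a $ i $ j - g b $ i $ j\<bar> \<le> Cg * \<bar>p a - p b\<bar> powr \<alpha>"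
      using HG by blast
    show "\<forall>a\<le>n. \<forall>b\<le>n. \<bar>xx a $ j - xx b $ j\<bar> \<le> Cx * \<bar>p a - p b\<bar> powr \<alpha>"
    proof (intro allI impI)
      fix a b assume "a \<le> n" "b \<le> n"
      have "\<bar>xx a $ j - xx b $ j\<bar> \<le> maxabs (xx a - xx b)" using maxabs_ge[of "xx a - xx b" j] by simp
      also have "\<dots> \<le> Cx * \<bar>p a - p b\<bar> powr \<alpha>" using HX \<open>a \<le> n\<close> \<open>b \<le> n\<close> by blast
      finally show "\<bar>xx a $ j - xx b $ j\<bar> \<le> Cx * \<bar>p a - p b\<bar> powr \<alpha>" .
    qed
  qed
  have "\<bar>((\<Sum>k<n. g k *v (xx (Suc k) - xx k)) - g 0 *v (xx n - xx 0)) $ i\<bar>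
     \<le> (\<Sum>j\<in>UNIV. \<bar>(\<Sum>k<n. g k $ i $ j * (xx (Suc k) $ j - xx k $ j)) - g 0 $ i $ j * (xx n $ j - xx 0 $ j)\<bar>)"
    unfolding e by (rule sum_abs)
  also have "\<dots> \<le> (\<Sum>j\<in>(UNIV::'h set). ?B)" by (rule sum_mono) (rule b)
  also have "\<dots> = real CARD('h) * ?B" by simp
  finally show "\<bar>((\<Sum>k<n. g k *v (xx (Suc k) - xx k)) - g 0 *v (xx n - xx 0)) $ i\<bar> \<le> real CARD('h) * ?B" .
qed

locale ysetup =
  fixes x :: "real \<Rightarrow> real^'h" and f :: "real^'d \<Rightarrow> real^'h^'d"
    and Df :: "'d \<Rightarrow> 'h \<Rightarrow> real^'d \<Rightarrow> real^'d"
    and y0 :: "real^'d" and \<alpha> C F0 F1 Z dd hh A B :: real and N :: nat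
  assumes al1: "1/2 < \<alpha>" and al2: "\<alpha> \<le> 1" and Cpos: "0 < C"
    and holder: "\<forall>s\<in>{0..1}. \<forall>t\<in>{0..1}. maxabs (x t - x s) \<le> C * \<bar>t - s\<bar> powr \<alpha>"
    and D1: "\<forall>i j z. ((\<lambda>w. f w $ i $ j) has_derivative (\<lambda>v. Df i j z \<bullet> v)) (at z)"
    and F0b: "\<forall>z i j. \<bar>f z $ i $ j\<bar> \<le> F0"
    and F1b: "\<forall>z i j k. \<bar>Df i j z $ k\<bar> \<le> F1"
    and Zdef: "Z = (\<Sum>n. 1 / real (Suc n) powr (2*\<alpha>))"
    and N1: "1 \<le> N"
    and Nbig: "2 * real CARD('d) * real CARD('h) * C * Z * F1 \<le> real N powr \<alpha>"
    and dd_def: "dd = real CARD('d)" and hh_def: "hh = real CARD('h)"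
    and A_def: "A = 2 * hh * F0 * C" and B_def: "B = hh * Z * dd * F1 * A * C"
begin

lemma al0: "0 < \<alpha>" using al1 by simp

lemma Zsummable: "summable (\<lambda>n. 1 / real (Suc n) powr (2*\<alpha>))"
proof -
  have "summable (\<lambda>n. real n powr (- (2*\<alpha>)))" using al1 by (subst summable_real_powr_iff) simp
  then have "summable (\<lambda>n. real (Suc n) powr (- (2*\<alpha>)))" by (subst summable_Suc_iff)
  then show ?thesis by (simp add: powr_minus_divide)
qed

lemma Zpartial: "(\<Sum>m<n. 1 / real (Suc m) powr (2*\<alpha>)) \<le> Z"
  unfolding Zdef by (rule sum_le_suminf[OF Zsummable]) auto

lemma Z0: "0 \<le> Z"
  unfolding Zdef by (rule suminf_nonneg[OF Zsummable]) auto

lemma F0pos: "0 \<le> F0" using F0b by (meson abs_ge_zero order_trans)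
lemma F1pos: "0 \<le> F1" using F1b by (meson abs_ge_zero order_trans)
lemma dd1: "1 \<le> dd" unfolding dd_def by (simp add: Suc_leI)
lemma hh1: "1 \<le> hh" unfolding hh_def by (simp add: Suc_leI)
lemma A0: "0 \<le> A" unfolding A_def using hh1 F0pos Cpos by simp
lemma B0: "0 \<le> B" unfolding B_def using hh1 dd1 Z0 F1pos A0 Cpos by simp

lemma f_cont: "isCont (\<lambda>w. f w $ i $ j) z"
  using D1 has_derivative_continuous by blast

lemma inner_bound: "\<bar>Df i j z \<bullet> v\<bar> \<le> dd * F1 * maxabs v"
proof -
  have "\<bar>Df i j z \<bullet> v\<bar> = \<bar>\<Sum>k\<in>UNIV. Df i j z $ k * v $ k\<bar>" by (simp add: inner_vec_def)
  also have "\<dots> \<le> (\<Sum>k\<in>UNIV. \<bar>Df i j z $ k\<bar> * \<bar>v $ k\<bar>)" by (rule order_trans[OF sum_abs]) (simp add: abs_mult)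
  also have "\<dots> \<le> (\<Sum>k\<in>(UNIV::'d set). F1 * maxabs v)"
    by (rule sum_mono) (intro mult_mono maxabs_ge; simp add: F1b F1pos)
  also have "\<dots> = dd * F1 * maxabs v" by (simp add: dd_def)
  finally show ?thesis .
qed

lemma f_lip: "\<bar>f z $ i $ j - f w $ i $ j\<bar> \<le> dd * F1 * maxabs (z - w)"
proof -
  define \<phi> where "\<phi> = (\<lambda>\<tau>. f (w + \<tau> *\<^sub>R (z - w)) $ i $ j)"
  have der: "DERIV \<phi> \<tau> :> Df i j (w + \<tau> *\<^sub>R (z - w)) \<bullet> (z - w)" for \<tau>
  proof -
    have l: "((\<lambda>\<tau>. w + \<tau> *\<^sub>R (z - w)) has_derivative (\<lambda>h. h *\<^sub>R (z - w))) (at \<tau>)"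
      by (auto intro!: derivative_eq_intros)
    have "(\<phi> has_derivative (\<lambda>h. Df i j (w + \<tau> *\<^sub>R (z - w)) \<bullet> (h *\<^sub>R (z - w)))) (at \<tau>)"
      unfolding \<phi>_def by (rule has_derivative_compose[OF l]) (use D1 in blast)
    then show ?thesis by (rule has_derivative_imp_has_field_derivative) simp
  qed
  obtain \<xi> where "\<phi> 1 - \<phi> 0 = (1 - 0) * (Df i j (w + \<xi> *\<^sub>R (z - w)) \<bullet> (z - w))"
    using MVT2[of 0 1 \<phi>, OF _ der] by auto
  then have "f z $ i $ j - f w $ i $ j = Df i j (w + \<xi> *\<^sub>R (z - w)) \<bullet> (z - w)"
    unfolding \<phi>_def by simp
  then show ?thesis using inner_bound by simp
qed

lemma f_mv: "maxabs (f z *v v) \<le> hh * F0 * maxabs v"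
  unfolding hh_def by (rule maxabs_mv) (simp add: F0b)

lemma x_holder: "s \<in> {0..1} \<Longrightarrow> t \<in> {0..1} \<Longrightarrow> maxabs (x t - x s) \<le> C * \<bar>t - s\<bar> powr \<alpha>"
  using holder by blast

end



context ysetup begin

definition M :: "nat \<Rightarrow> nat" where "M n = N * 2^n"
definition tt :: "nat \<Rightarrow> nat \<Rightarrow> real" where "tt n k = real k / real (M n)"

primrec eul :: "nat \<Rightarrow> nat \<Rightarrow> real^'d" where
  "eul n 0 = y0"
| "eul n (Suc k) = eul n k + f (eul n k) *v (x (tt n (Suc k)) - x (tt n k))"

lemma M_pos: "0 < M n" unfolding M_def using N1 by simp

lemma M_ge: "2^n \<le> M n" unfolding M_def using N1 by simp

lemma tt_in: "k \<le> M n \<Longrightarrow> tt n k \<in> {0..1}"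
  unfolding tt_def using M_pos[of n] by (auto simp: field_simps)

lemma tt_diff: "a \<le> b \<Longrightarrow> tt n b - tt n a = real (b - a) / real (M n)"
  unfolding tt_def by (simp add: of_nat_diff diff_divide_distrib)

lemma tt_strict: "a < b \<Longrightarrow> tt n a < tt n b"
  unfolding tt_def using M_pos[of n] by (simp add: divide_strict_right_mono)

lemma tt_mono: "a \<le> b \<Longrightarrow> tt n a \<le> tt n b"
  unfolding tt_def using M_pos[of n] by (simp add: divide_right_mono)

lemma tt_small: "a \<le> b \<Longrightarrow> b - a \<le> 2^n \<Longrightarrow> tt n b - tt n a \<le> 1 / real N"
proof -
  assume "a \<le> b" "b - a \<le> 2^n"
  then have "tt n b - tt n a = real (b - a) / (real N * 2^n)" by (simp add: tt_diff M_def)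
  also have "\<dots> \<le> 2^n / (real N * 2^n)"
    using \<open>b - a \<le> 2^n\<close> N1 by (intro divide_right_mono) (auto simp del: of_nat_diff simp add: of_nat_le_iff[symmetric])
  also have "\<dots> = 1 / real N" by simp
  finally show ?thesis .
qed

lemma riemann:
  assumes "a \<le> b"
  shows "eul n b - eul n a = (\<Sum>m<b-a. f (eul n (a+m)) *v (x (tt n (Suc (a+m))) - x (tt n (a+m))))"
  using assms
proof (induction b rule: dec_induct)
  case base then show ?case by simp
next
  case (step b)
  have e: "Suc b - a = Suc (b - a)" using step.hyps by simp
  show ?case unfolding e sum.lessThan_Suc using step by simp
qed

lemma theta_bound:
  assumes ab: "a \<le> b" "b \<le> M n" and Cy: "0 \<le> Cy"
    and H: "\<And>u v. a \<le> u \<Longrightarrow> u \<le> b \<Longrightarrow> a \<le> v \<Longrightarrow> v \<le> b \<Longrightarrow>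
              maxabs (eul n u - eul n v) \<le> Cy * \<bar>tt n u - tt n v\<bar> powr \<alpha>"
  shows "maxabs (eul n b - eul n a - f (eul n a) *v (x (tt n b) - x (tt n a)))
          \<le> hh * (dd * F1 * Cy * C * (tt n b - tt n a) powr (2*\<alpha>) * Z)"
proof -
  define g where "g = (\<lambda>m. f (eul n (a+m)))"
  define xx where "xx = (\<lambda>m. x (tt n (a+m)))"
  define p where "p = (\<lambda>m. tt n (a+m))"
  have C0: "0 \<le> C" using Cpos by simp
  have Cg: "0 \<le> dd * F1 * Cy" using dd1 F1pos Cy by simp
  have inc: "\<forall>k<b-a. p k < p (Suc k)" unfolding p_def by (auto intro: tt_strict)
  have HG: "\<forall>u\<le>b-a. \<forall>v\<le>b-a. \<forall>i j. \<bar>g u $ i $ j - g v $ i $ j\<bar> \<le> (dd * F1 * Cy) * \<bar>p u - p v\<bar> powr \<alpha>"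
  proof (intro allI impI)
    fix u v i j assume uv: "u \<le> b - a" "v \<le> b - a"
    have "\<bar>g u $ i $ j - g v $ i $ j\<bar> \<le> dd * F1 * maxabs (eul n (a+u) - eul n (a+v))"
      unfolding g_def by (rule f_lip)
    also have "\<dots> \<le> dd * F1 * (Cy * \<bar>p u - p v\<bar> powr \<alpha>)"
      unfolding p_def using uv ab dd1 F1pos by (intro mult_left_mono H) auto
    finally show "\<bar>g u $ i $ j - g v $ i $ j\<bar> \<le> (dd * F1 * Cy) * \<bar>p u - p v\<bar> powr \<alpha>" by simp
  qed
  have HX: "\<forall>u\<le>b-a. \<forall>v\<le>b-a. maxabs (xx u - xx v) \<le> C * \<bar>p u - p v\<bar> powr \<alpha>"
    unfolding xx_def p_def using ab by (auto intro!: x_holder tt_in)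
  have "maxabs ((\<Sum>k<b-a. g k *v (xx (Suc k) - xx k)) - g 0 *v (xx (b-a) - xx 0))
     \<le> real CARD('h) * ((dd * F1 * Cy) * C * (p (b-a) - p 0) powr (2*\<alpha>) * (\<Sum>m<b-a-1. 1 / real (Suc m) powr (2*\<alpha>)))"
    by (rule dyl_vec[OF al0 Cg C0 inc HG HX])
  also have "\<dots> \<le> hh * ((dd * F1 * Cy) * C * (p (b-a) - p 0) powr (2*\<alpha>) * Z)"
    unfolding hh_def using Cg C0 dd1 F1pos Cy by (intro mult_left_mono Zpartial mult_nonneg_nonneg) auto
  finally have *: "maxabs ((\<Sum>k<b-a. g k *v (xx (Suc k) - xx k)) - g 0 *v (xx (b-a) - xx 0))
     \<le> hh * ((dd * F1 * Cy) * C * (p (b-a) - p 0) powr (2*\<alpha>) * Z)" .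
  have s: "(\<Sum>k<b-a. g k *v (xx (Suc k) - xx k)) = eul n b - eul n a"
    unfolding riemann[OF ab(1)] g_def xx_def by simp
  have **: "maxabs (eul n b - eul n a - g 0 *v (xx (b-a) - xx 0))
     \<le> hh * ((dd * F1 * Cy) * C * (p (b-a) - p 0) powr (2*\<alpha>) * Z)"
    using * unfolding s .
  show ?thesis using ** unfolding g_def xx_def p_def using ab(1) by (simp add: algebra_simps)
qed

lemma maxabs_zero: "maxabs (0::real^'n) = 0"
  using maxabs_nonneg[of "0::real^'n"] maxabs_le[of "0::real^'n" 0] by simp

lemma tt_pow_le1: "a \<le> b \<Longrightarrow> b \<le> M n \<Longrightarrow> (tt n b - tt n a) powr \<alpha> \<le> 1"
proof -
  assume ab: "a \<le> b" "b \<le> M n"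
  have "0 \<le> tt n b - tt n a" using tt_mono[OF ab(1)] by simp
  moreover have "tt n b - tt n a \<le> 1" using tt_in[of a n] tt_in[OF ab(2)] ab by auto
  ultimately have "(tt n b - tt n a) powr \<alpha> \<le> 1 powr \<alpha>" using al0 by (intro powr_mono2) auto
  then show ?thesis by simp
qed

lemma E1_main:
  "\<exists>An. 0 \<le> An \<and> An \<le> A \<and> (\<forall>u v. u \<le> M n \<longrightarrow> v \<le> M n \<longrightarrow> u - v \<le> 2^n \<longrightarrow> v - u \<le> 2^n \<longrightarrow>
      maxabs (eul n u - eul n v) \<le> An * \<bar>tt n u - tt n v\<bar> powr \<alpha>)"
proof -
  define S where "S = {(u,v). u < v \<and> v \<le> M n \<and> v - u \<le> 2^n}"
  define r where "r = (\<lambda>(u,v). maxabs (eul n v - eul n u) / (tt n v - tt n u) powr \<alpha>)"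
  have finS: "finite S"
    by (rule finite_subset[of _ "{..M n} \<times> {..M n}"]) (auto simp: S_def)
  have neS: "(0,1) \<in> S" unfolding S_def using M_pos[of n] by simp
  define An where "An = Max (r ` S)"
  have rle: "p \<in> S \<Longrightarrow> r p \<le> An" for p unfolding An_def using finS by (intro Max_ge) auto
  have r0: "p \<in> S \<Longrightarrow> 0 \<le> r p" for p unfolding r_def by (cases p) (auto intro!: divide_nonneg_nonneg maxabs_nonneg)
  have An0: "0 \<le> An" using rle[OF neS] r0[OF neS] by simp
  have lt: "maxabs (eul n v - eul n u) \<le> An * (tt n v - tt n u) powr \<alpha>" if "(u,v) \<in> S" for u v
  proof -
    have "u < v" using that unfolding S_def by simp
    then have pos: "0 < (tt n v - tt n u) powr \<alpha>" using tt_strict[of u v n] by simp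
    have "maxabs (eul n v - eul n u) / (tt n v - tt n u) powr \<alpha> \<le> An" using rle[OF that] unfolding r_def by simp
    then show ?thesis using pos by (simp add: divide_le_eq)
  qed
  have gen: "maxabs (eul n u - eul n v) \<le> An * \<bar>tt n u - tt n v\<bar> powr \<alpha>"
    if uv: "u \<le> M n" "v \<le> M n" "u - v \<le> 2^n" "v - u \<le> 2^n" for u v
  proof (cases u v rule: linorder_cases)
    case less
    then have "(u,v) \<in> S" unfolding S_def using uv by simp
    then show ?thesis using lt[of u v] tt_strict[OF less, of n] by (simp add: maxabs_commute)
  next
    case equal then show ?thesis by (simp add: maxabs_zero)
  next
    case greater
    then have "(v,u) \<in> S" unfolding S_def using uv by simp
    then show ?thesis using lt[of v u] tt_strict[OF greater, of n] by simp
  qed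
  have key: "r p \<le> hh * F0 * C + An / 2" if pS: "p \<in> S" for p
  proof -
    obtain u v where p: "p = (u,v)" by (cases p)
    have uv: "u < v" "v \<le> M n" "v - u \<le> 2^n" using pS unfolding p S_def by auto
    define T where "T = tt n v - tt n u"
    have T0: "0 < T" unfolding T_def using tt_strict[OF uv(1)] by simp
    have T1: "T \<le> 1 / real N" unfolding T_def using tt_small uv by simp
    have Ta: "0 < T powr \<alpha>" using T0 by simp
    have th: "maxabs (eul n v - eul n u - f (eul n u) *v (x (tt n v) - x (tt n u)))
          \<le> hh * (dd * F1 * An * C * T powr (2*\<alpha>) * Z)"
      unfolding T_def using uv An0 by (intro theta_bound gen) auto
    have fx: "maxabs (f (eul n u) *v (x (tt n v) - x (tt n u))) \<le> hh * F0 * (C * T powr \<alpha>)"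
    proof -
      have "maxabs (f (eul n u) *v (x (tt n v) - x (tt n u))) \<le> hh * F0 * maxabs (x (tt n v) - x (tt n u))"
        by (rule f_mv)
      also have "\<dots> \<le> hh * F0 * (C * T powr \<alpha>)"
      proof -
        have "maxabs (x (tt n v) - x (tt n u)) \<le> C * \<bar>tt n v - tt n u\<bar> powr \<alpha>"
          using uv by (intro x_holder tt_in) auto
        then have "maxabs (x (tt n v) - x (tt n u)) \<le> C * T powr \<alpha>" using T0 unfolding T_def by simp
        then show ?thesis using hh1 F0pos by (intro mult_left_mono) auto
      qed
      finally show ?thesis .
    qed
    define c where "c = hh * dd * F1 * C * Z"
    have c0: "0 \<le> c" unfolding c_def using hh1 dd1 F1pos Cpos Z0 by simp
    have Nal: "0 < real N powr \<alpha>" using N1 by simp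
    have "T powr \<alpha> \<le> (1 / real N) powr \<alpha>" using T0 T1 al0 by (intro powr_mono2) auto
    also have "\<dots> = 1 / real N powr \<alpha>" using N1 by (simp add: powr_divide)
    finally have "c * T powr \<alpha> \<le> c / real N powr \<alpha>" using c0 by (simp add: mult_left_mono divide_inverse)
    also have "\<dots> \<le> 1/2" using Nbig Nal unfolding c_def dd_def hh_def by (simp add: field_simps)
    finally have cT: "c * T powr \<alpha> \<le> 1/2" .
    have p2: "T powr (2*\<alpha>) = T powr \<alpha> * T powr \<alpha>" by (simp add: powr_add[symmetric])
    have "maxabs (eul n v - eul n u) \<le> maxabs (f (eul n u) *v (x (tt n v) - x (tt n u)))
        + maxabs (eul n v - eul n u - f (eul n u) *v (x (tt n v) - x (tt n u)))"
      using maxabs_triangle[of "f (eul n u) *v (x (tt n v) - x (tt n u))" "eul n v - eul n u - f (eul n u) *v (x (tt n v) - x (tt n u))"] by simp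
    also have "\<dots> \<le> hh * F0 * (C * T powr \<alpha>) + hh * (dd * F1 * An * C * T powr (2*\<alpha>) * Z)"
      using fx th by simp
    also have "\<dots> = (hh * F0 * C + An * (c * T powr \<alpha>)) * T powr \<alpha>"
      unfolding p2 c_def by (simp add: algebra_simps)
    also have "\<dots> \<le> (hh * F0 * C + An / 2) * T powr \<alpha>"
    proof -
      have "An * (c * T powr \<alpha>) \<le> An * (1/2)" by (rule mult_left_mono[OF cT An0])
      then show ?thesis using Ta by (intro mult_right_mono) auto
    qed
    finally have "maxabs (eul n v - eul n u) \<le> (hh * F0 * C + An / 2) * T powr \<alpha>" .
    then show ?thesis unfolding p r_def using Ta T_def by (simp add: divide_le_eq)
  qed
  have "An \<in> r ` S" unfolding An_def using finS neS by (intro Max_in) auto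
  then have "An \<le> hh * F0 * C + An / 2" using key by auto
  then have "An \<le> A" unfolding A_def by simp
  then show ?thesis using An0 gen by blast
qed

lemma E1abs:
  assumes "u \<le> M n" "v \<le> M n" "u - v \<le> 2^n" "v - u \<le> 2^n"
  shows "maxabs (eul n u - eul n v) \<le> A * \<bar>tt n u - tt n v\<bar> powr \<alpha>"
proof -
  obtain An where An: "0 \<le> An" "An \<le> A" "\<forall>u v. u \<le> M n \<longrightarrow> v \<le> M n \<longrightarrow> u - v \<le> 2^n \<longrightarrow> v - u \<le> 2^n \<longrightarrow>
      maxabs (eul n u - eul n v) \<le> An * \<bar>tt n u - tt n v\<bar> powr \<alpha>"
    using E1_main[of n] by blast
  have "maxabs (eul n u - eul n v) \<le> An * \<bar>tt n u - tt n v\<bar> powr \<alpha>" using An(3) assms by blast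
  also have "\<dots> \<le> A * \<bar>tt n u - tt n v\<bar> powr \<alpha>" using An(2) by (intro mult_right_mono) auto
  finally show ?thesis .
qed

lemma E1:
  assumes "a \<le> b" "b \<le> M n" "b - a \<le> 2^n"
  shows "maxabs (eul n b - eul n a) \<le> A * (tt n b - tt n a) powr \<alpha>"
  using E1abs[of b n a] assms tt_mono[OF assms(1), of n] by simp

lemma E2:
  assumes ab: "a \<le> b" "b \<le> M n" "b - a \<le> 2^n"
  shows "maxabs (eul n b - eul n a - f (eul n a) *v (x (tt n b) - x (tt n a))) \<le> B * (tt n b - tt n a) powr (2*\<alpha>)"
proof -
  have "maxabs (eul n b - eul n a - f (eul n a) *v (x (tt n b) - x (tt n a)))
     \<le> hh * (dd * F1 * A * C * (tt n b - tt n a) powr (2*\<alpha>) * Z)"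
    using ab A0 by (intro theta_bound E1abs) auto
  also have "\<dots> = B * (tt n b - tt n a) powr (2*\<alpha>)" unfolding B_def by (simp add: algebra_simps)
  finally show ?thesis .
qed

lemma bnd_aux: "k \<le> M n \<Longrightarrow> maxabs (eul n k - y0) \<le> A * (real (k div 2^n) + 1)"
proof (induction k rule: less_induct)
  case (less k)
  show ?case
  proof (cases "k < 2^n")
    case True
    have "maxabs (eul n k - eul n 0) \<le> A * (tt n k - tt n 0) powr \<alpha>"
      using True less.prems by (intro E1) auto
    also have "\<dots> \<le> A * 1" using A0 tt_pow_le1[of 0 k n] less.prems by (intro mult_left_mono) auto
    finally show ?thesis using True by simp
  next
    case False
    define j where "j = k - 2^n"
    have p2: "0 < (2::nat)^n" by simp
    have k0: "0 < k" using False p2 by linarith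
    have jk: "j < k" "j \<le> M n" using diff_less[OF p2 k0] less.prems unfolding j_def by auto
    have IH: "maxabs (eul n j - y0) \<le> A * (real (j div 2^n) + 1)" using less.IH[OF jk] .
    have "maxabs (eul n k - eul n j) \<le> A * (tt n k - tt n j) powr \<alpha>"
      using False less.prems unfolding j_def by (intro E1) auto
    also have "\<dots> \<le> A * 1" using A0 tt_pow_le1[of j k n] less.prems jk by (intro mult_left_mono) auto
    finally have s: "maxabs (eul n k - eul n j) \<le> A" by simp
    have d: "k div 2^n = Suc (j div 2^n)" unfolding j_def using False p2 by (simp add: le_div_geq)
    have "maxabs (eul n k - y0) \<le> maxabs (eul n k - eul n j) + maxabs (eul n j - y0)"
      using maxabs_triangle[of "eul n k - eul n j" "eul n j - y0"] by simp
    also have "\<dots> \<le> A * (real (k div 2^n) + 1)" using s IH unfolding d by (simp add: algebra_simps)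
    finally show ?thesis .
  qed
qed

lemma bnd: "k \<le> M n \<Longrightarrow> maxabs (eul n k - y0) \<le> A * (real N + 1)"
proof -
  assume k: "k \<le> M n"
  have "k div 2^n \<le> (N * 2^n) div 2^n" using k unfolding M_def by (rule div_le_mono)
  then have "k div 2^n \<le> N" by simp
  then have "A * (real (k div 2^n) + 1) \<le> A * (real N + 1)" using A0 by (intro mult_left_mono) auto
  then show ?thesis using bnd_aux[OF k] by linarith
qed

end



context ysetup begin

definition Y :: "nat \<Rightarrow> real \<Rightarrow> real^'d" where
  "Y n t = eul n (min (M n) (nat \<lfloor>t * real (M n)\<rfloor>))"

lemma fl_le_M: "t \<in> {0..1} \<Longrightarrow> nat \<lfloor>t * real (M n)\<rfloor> \<le> M n"
proof -
  assume t: "t \<in> {0..1}"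
  have "t * real (M n) \<le> real (M n)" using t M_pos[of n] by (simp add: mult_left_le_one_le)
  then have "nat \<lfloor>t * real (M n)\<rfloor> \<le> nat \<lfloor>real (M n)\<rfloor>" by (intro nat_mono floor_mono)
  then show ?thesis by simp
qed

lemma Y_grid: "t \<in> {0..1} \<Longrightarrow> Y n t = eul n (nat \<lfloor>t * real (M n)\<rfloor>)"
  unfolding Y_def using fl_le_M by (simp add: min_absorb2)

lemma Y_bnd: "maxabs (Y n t - y0) \<le> A * (real N + 1)"
  unfolding Y_def by (rule bnd) simp

lemma Y_norm_bnd: "Y n t \<in> cball y0 (dd * (A * (real N + 1)))"
proof -
  have "norm (Y n t - y0) \<le> dd * maxabs (Y n t - y0)" unfolding dd_def by (rule norm_le_maxabs)
  also have "\<dots> \<le> dd * (A * (real N + 1))" using Y_bnd dd1 by (intro mult_left_mono) auto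
  finally show ?thesis by (simp add: dist_norm norm_minus_commute)
qed

lemma floor_facts:
  assumes "0 \<le> u"
  shows "real (nat \<lfloor>u\<rfloor>) \<le> u" "u < real (nat \<lfloor>u\<rfloor>) + 1"
proof -
  show "real (nat \<lfloor>u\<rfloor>) \<le> u" by (rule of_nat_floor[OF assms])
  have e: "real (nat \<lfloor>u\<rfloor>) = of_int \<lfloor>u\<rfloor>" using assms by simp
  show "u < real (nat \<lfloor>u\<rfloor>) + 1" unfolding e by (rule real_of_int_floor_add_one_gt)
qed

lemma M_split: "n0 \<le> L \<Longrightarrow> real (M L) = real (M n0) * 2^(L - n0)"
  unfolding M_def by (simp add: power_add[symmetric])

lemma grid_close:
  assumes t: "t \<in> {0..1}" and L: "n0 \<le> L"
  defines "k0 \<equiv> nat \<lfloor>t * real (M n0)\<rfloor>"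
  defines "a \<equiv> k0 * 2^(L - n0)" and "b \<equiv> nat \<lfloor>t * real (M L)\<rfloor>"
  shows "a \<le> b" "b \<le> M L" "b - a \<le> 2^L" "tt L b - tt L a \<le> 1 / 2^n0"
    "tt L a = real k0 / real (M n0)"
proof -
  define u where "u = t * real (M n0)"
  have u0: "0 \<le> u" unfolding u_def using t by simp
  have e: "t * real (M L) = u * 2^(L - n0)" unfolding u_def using M_split[OF L] by simp
  have k0u: "real k0 \<le> u" "u < real k0 + 1" unfolding k0_def u_def[symmetric] using floor_facts[OF u0] by auto
  have ra: "real a = real k0 * 2^(L - n0)" unfolding a_def by simp
  have "real a \<le> t * real (M L)" unfolding ra e using k0u by (intro mult_right_mono) auto
  then show ab: "a \<le> b" unfolding b_def by (rule le_nat_floor)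
  show "b \<le> M L" unfolding b_def by (rule fl_le_M[OF t])
  have "real b \<le> t * real (M L)" unfolding b_def using floor_facts(1)[of "t * real (M L)"] t by simp
  also have "\<dots> < real a + 2^(L - n0)"
  proof -
    have "u * 2^(L - n0) < (real k0 + 1) * 2^(L - n0)" using k0u by (intro mult_strict_right_mono) auto
    then show ?thesis unfolding e ra by (simp add: algebra_simps)
  qed
  finally have bl: "real b < real a + 2^(L - n0)" .
  then have "real b < real (a + 2^(L - n0))" by simp
  then have "b < a + 2^(L - n0)" by (simp only: of_nat_less_iff)
  moreover have "(2::nat)^(L - n0) \<le> 2^L" by (rule power_increasing) auto
  ultimately show "b - a \<le> 2^L" by linarith
  have "tt L b - tt L a = (real b - real a) / real (M L)" unfolding tt_def by (simp add: diff_divide_distrib)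
  also have "\<dots> \<le> 2^(L - n0) / real (M L)" using bl M_pos[of L] by (intro divide_right_mono) auto
  also have "\<dots> = 1 / real (M n0)" unfolding M_split[OF L] using M_pos[of n0] by simp
  also have "\<dots> \<le> 1 / 2^n0" using M_ge[of n0] M_pos[of n0] by (intro divide_left_mono) (auto simp flip: of_nat_le_iff)
  finally show "tt L b - tt L a \<le> 1 / 2^n0" .
  show "tt L a = real k0 / real (M n0)" unfolding tt_def ra M_split[OF L] by simp
qed

definition rq :: "nat \<Rightarrow> real" where "rq m = (case prod_decode m of (n,k) \<Rightarrow> real k / real (M n))"

lemma rq_enc: "rq (prod_encode (n,k)) = real k / real (M n)" unfolding rq_def by simp

lemma ex_diag: "\<exists>d. strict_mono d \<and> (\<forall>m. convergent (\<lambda>j. Y (d j) (rq m)))"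
proof -
  let ?P = "\<lambda>m s. convergent (\<lambda>j. Y (s j) (rq m))"
  interpret sq: subseqs ?P
  proof (unfold subseqs_def, intro allI impI)
    fix m and s :: "nat \<Rightarrow> nat" assume s: "strict_mono s"
    have "\<forall>j. Y (s j) (rq m) \<in> cball y0 (dd * (A * (real N + 1)))" using Y_norm_bnd by blast
    then obtain l r where "strict_mono (r::nat\<Rightarrow>nat)" "((\<lambda>j. Y (s j) (rq m)) \<circ> r) \<longlonglongrightarrow> l"
      using compact_imp_seq_compact[OF compact_cball] seq_compactE by metis
    then show "\<exists>r'. strict_mono r' \<and> convergent (\<lambda>j. Y ((s \<circ> r') j) (rq m))"
      by (auto simp: convergent_def comp_def)
  qed
  have "convergent (\<lambda>j. Y (sq.diagseq j) (rq m))" for m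
  proof -
    have "?P m (sq.diagseq \<circ> ((+) (Suc m)))"
      by (rule sq.diagseq_holds) (auto dest: convergent_subseq_convergent simp: comp_def)
    then have "convergent (\<lambda>j. Y (sq.diagseq (j + Suc m)) (rq m))" by (simp add: add.commute comp_def)
    then show ?thesis by (subst (asm) convergent_ignore_initial_segment)
  qed
  then show ?thesis using sq.subseq_diagseq by blast
qed

end



lemma lim_maxabs_le:
  fixes U :: "nat \<Rightarrow> real^'n"
  assumes "U \<longlonglongrightarrow> u" "W \<longlonglongrightarrow> w" "\<And>j. maxabs (U j) \<le> W j"
  shows "maxabs u \<le> w"
proof (rule maxabs_le)
  fix i
  have "(\<lambda>j. \<bar>U j $ i\<bar>) \<longlonglongrightarrow> \<bar>u $ i\<bar>" by (intro tendsto_rabs tendsto_vec_nth assms(1))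
  moreover have "\<forall>j. \<bar>U j $ i\<bar> \<le> W j"
  proof
    fix j show "\<bar>U j $ i\<bar> \<le> W j" using maxabs_ge[of "U j" i] assms(3)[of j] by linarith
  qed
  ultimately show "\<bar>u $ i\<bar> \<le> w" using assms(2) by (intro LIMSEQ_le) auto
qed

context ysetup begin

lemma conv_all:
  assumes d: "strict_mono d" and cq: "\<forall>m. convergent (\<lambda>j. Y (d j) (rq m))" and t: "t \<in> {0..1}"
  shows "convergent (\<lambda>j. Y (d j) t)"
proof (rule Cauchy_convergent_iff[THEN iffD1], rule metric_CauchyI)
  fix \<epsilon> :: real assume \<epsilon>: "0 < \<epsilon>"
  define \<eta> where "\<eta> = \<epsilon> / 3"
  have \<eta>0: "0 < \<eta>" unfolding \<eta>_def using \<epsilon> by simp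
  have dA: "0 \<le> dd * A" using dd1 A0 by simp
  define z where "z = \<eta> / (dd * A + 1)"
  have z0: "0 < z" unfolding z_def using \<eta>0 dA by simp
  obtain n0 where n0: "(1/2::real)^n0 < z powr (1/\<alpha>)"
    using real_arch_pow_inv[of "z powr (1/\<alpha>)" "1/2"] z0 by auto
  have w: "(1 / 2^n0) powr \<alpha> < z"
  proof -
    have "(1 / 2^n0) powr \<alpha> < (z powr (1/\<alpha>)) powr \<alpha>"
      using n0 al0 by (intro powr_less_mono2) (auto simp: power_one_over)
    also have "\<dots> = z" using al0 z0 by (simp add: powr_powr)
    finally show ?thesis .
  qed
  have c\<eta>: "dd * A * (1 / 2^n0) powr \<alpha> < \<eta>"
  proof -
    have "dd * A * (1 / 2^n0) powr \<alpha> \<le> (dd * A + 1) * (1 / 2^n0) powr \<alpha>" by (intro mult_right_mono) auto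
    also have "\<dots> < (dd * A + 1) * z" using w dA by (intro mult_strict_left_mono) auto
    also have "\<dots> = \<eta>" unfolding z_def using dA by simp
    finally show ?thesis .
  qed
  define k0 where "k0 = nat \<lfloor>t * real (M n0)\<rfloor>"
  define q where "q = real k0 / real (M n0)"
  have qrq: "q = rq (prod_encode (n0, k0))" unfolding q_def rq_enc ..
  have close: "dist (Y L t) (Y L q) < \<eta>" if L: "n0 \<le> L" for L
  proof -
    define a where "a = k0 * 2^(L - n0)"
    define b where "b = nat \<lfloor>t * real (M L)\<rfloor>"
    note gc = grid_close[OF t L, folded k0_def, folded a_def b_def q_def]
    have qa: "q * real (M L) = real a" using gc(5) M_pos[of L] unfolding tt_def by (simp add: field_simps)
    have q01: "q \<in> {0..1}" using gc(5) tt_in[of a L] gc(1,2) by simp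
    have Yq: "Y L q = eul L a" unfolding Y_grid[OF q01] qa by simp
    have Yt: "Y L t = eul L b" unfolding Y_grid[OF t] b_def ..
    have "dist (Y L t) (Y L q) = norm (eul L b - eul L a)" unfolding Yq Yt dist_norm ..
    also have "\<dots> \<le> dd * maxabs (eul L b - eul L a)" unfolding dd_def by (rule norm_le_maxabs)
    also have "\<dots> \<le> dd * (A * \<bar>tt L b - tt L a\<bar> powr \<alpha>)"
      using gc dd1 by (intro mult_left_mono E1abs) auto
    also have "\<dots> \<le> dd * (A * (1 / 2^n0) powr \<alpha>)"
      using gc dd1 A0 tt_mono[OF gc(1), of L] al0
      by (intro mult_left_mono powr_mono2) auto
    also have "\<dots> < \<eta>" using c\<eta> by (simp add: mult.assoc)
    finally show ?thesis .
  qed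
  have "Cauchy (\<lambda>j. Y (d j) q)" unfolding qrq using cq by (simp add: Cauchy_convergent_iff)
  then obtain J1 where J1: "\<forall>i\<ge>J1. \<forall>j\<ge>J1. dist (Y (d i) q) (Y (d j) q) < \<eta>"
    using metric_CauchyD \<eta>0 by blast
  show "\<exists>J. \<forall>i\<ge>J. \<forall>j\<ge>J. dist (Y (d i) t) (Y (d j) t) < \<epsilon>"
  proof (intro exI allI impI)
    fix i j assume i: "max n0 J1 \<le> i" and j: "max n0 J1 \<le> j"
    have di: "n0 \<le> d i" using i seq_suble[OF d, of i] by simp
    have dj: "n0 \<le> d j" using j seq_suble[OF d, of j] by simp
    have t1: "dist (Y (d i) t) (Y (d j) t) \<le> dist (Y (d i) t) (Y (d i) q) + dist (Y (d i) q) (Y (d j) t)"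
      by (rule dist_triangle)
    have t2: "dist (Y (d i) q) (Y (d j) t) \<le> dist (Y (d i) q) (Y (d j) q) + dist (Y (d j) q) (Y (d j) t)"
      by (rule dist_triangle)
    have h: "dist (Y (d i) q) (Y (d j) q) < \<eta>" using J1 i j by simp
    have h1: "dist (Y (d i) t) (Y (d i) q) < \<eta>" using close[OF di] .
    have h2: "dist (Y (d j) q) (Y (d j) t) < \<eta>" using close[OF dj] by (simp add: dist_commute)
    have "dist (Y (d i) t) (Y (d j) t) < \<eta> + \<eta> + \<eta>" using t1 t2 h h1 h2 by linarith
    then show "dist (Y (d i) t) (Y (d j) t) < \<epsilon>" unfolding \<eta>_def by simp
  qed
qed

lemma grid_lim:
  assumes s: "s \<in> {0..1}"
  shows "(\<lambda>L. tt L (nat \<lfloor>s * real (M L)\<rfloor>)) \<longlonglongrightarrow> s"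
proof -
  have b: "norm (tt L (nat \<lfloor>s * real (M L)\<rfloor>) - s) \<le> (1/2)^L" for L
  proof -
    have s0: "0 \<le> s * real (M L)" using s by simp
    note ff = floor_facts[OF s0]
    have Mp: "0 < real (M L)" using M_pos[of L] by simp
    have "\<bar>real (nat \<lfloor>s * real (M L)\<rfloor>) - s * real (M L)\<bar> \<le> 1" using ff by linarith
    moreover have "real (nat \<lfloor>s * real (M L)\<rfloor>) / real (M L) - s = (real (nat \<lfloor>s * real (M L)\<rfloor>) - s * real (M L)) / real (M L)"
      using Mp by (simp add: diff_divide_distrib)
    ultimately have "\<bar>real (nat \<lfloor>s * real (M L)\<rfloor>) / real (M L) - s\<bar> \<le> 1 / real (M L)"
      using Mp by (simp add: abs_divide divide_right_mono)
    also have "\<dots> \<le> 1 / 2^L" using M_ge[of L] M_pos[of L] by (intro divide_left_mono) (auto simp flip: of_nat_le_iff)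
    finally show ?thesis unfolding tt_def by (simp add: power_one_over)
  qed
  have "(\<lambda>L. tt L (nat \<lfloor>s * real (M L)\<rfloor>) - s) \<longlonglongrightarrow> 0"
    by (rule Lim_null_comparison[OF always_eventually[OF allI[OF b]]]) (intro LIMSEQ_power_zero, simp)
  then show ?thesis by (simp add: LIM_zero_iff)
qed

lemma x_seq:
  assumes u: "\<And>j. u j \<in> {0..1}" and ut: "u \<longlonglongrightarrow> t" and t: "t \<in> {0..1}"
  shows "(\<lambda>j. x (u j)) \<longlonglongrightarrow> x t"
proof -
  have b: "norm (x (u j) - x t) \<le> hh * (C * \<bar>u j - t\<bar> powr \<alpha>)" for j
  proof -
    have "norm (x (u j) - x t) \<le> hh * maxabs (x (u j) - x t)" unfolding hh_def by (rule norm_le_maxabs)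
    also have "\<dots> \<le> hh * (C * \<bar>u j - t\<bar> powr \<alpha>)" using hh1 u t by (intro mult_left_mono x_holder) auto
    finally show ?thesis .
  qed
  have "(\<lambda>j. u j - t) \<longlonglongrightarrow> 0" using tendsto_diff[OF ut tendsto_const[of t]] by simp
  then have "(\<lambda>j. \<bar>u j - t\<bar>) \<longlonglongrightarrow> 0" by (rule tendsto_rabs_zero)
  then have "(\<lambda>j. \<bar>u j - t\<bar> powr \<alpha>) \<longlonglongrightarrow> 0" using al0 by (intro tendsto_zero_powrI) auto
  then have "(\<lambda>j. hh * (C * \<bar>u j - t\<bar> powr \<alpha>)) \<longlonglongrightarrow> 0" by (auto intro!: tendsto_mult_right_zero)
  then have "(\<lambda>j. x (u j) - x t) \<longlonglongrightarrow> 0"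
    by (rule Lim_null_comparison[OF always_eventually[OF allI[OF b]]])
  then show ?thesis by (simp add: LIM_zero_iff)
qed

lemma fmv_tendsto:
  assumes "U \<longlonglongrightarrow> u" "V \<longlonglongrightarrow> v"
  shows "(\<lambda>j. f (U j) *v V j) \<longlonglongrightarrow> f u *v v"
proof (rule vec_tendstoI)
  fix i
  have e: "\<And>j. (f (U j) *v V j) $ i = (\<Sum>k\<in>UNIV. f (U j) $ i $ k * V j $ k)"
    by (simp add: matrix_vector_mult_def)
  have e2: "(f u *v v) $ i = (\<Sum>k\<in>UNIV. f u $ i $ k * v $ k)"
    by (simp add: matrix_vector_mult_def)
  have "(\<lambda>j. \<Sum>k\<in>UNIV. f (U j) $ i $ k * V j $ k) \<longlonglongrightarrow> (\<Sum>k\<in>UNIV. f u $ i $ k * v $ k)"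
    by (rule tendsto_sum, rule tendsto_mult, rule isCont_tendsto_compose[OF f_cont assms(1)], rule tendsto_vec_nth[OF assms(2)])
  then show "(\<lambda>j. (f (U j) *v V j) $ i) \<longlonglongrightarrow> (f u *v v) $ i" unfolding e e2 .
qed

end



lemma maxabs_uminus: "maxabs (- (v::real^'n)) = maxabs v"
  unfolding maxabs_def by simp

context ysetup begin


lemma pair_facts:
  fixes L :: nat
  assumes s: "s \<in> {0..1}" and t: "t \<in> {0..1}" and st: "s \<le> t" and tN: "t - s \<le> 1 / real N"
  defines "a \<equiv> nat \<lfloor>s * real (M L)\<rfloor>" and "b \<equiv> nat \<lfloor>t * real (M L)\<rfloor>"
  shows "a \<le> b" "b \<le> M L" "b - a \<le> 2^L"
proof -
  show "a \<le> b" unfolding a_def b_def using st by (intro nat_mono floor_mono mult_right_mono) auto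
  show "b \<le> M L" unfolding b_def by (rule fl_le_M[OF t])
  have s0: "0 \<le> s * real (M L)" using s by simp
  have t0: "0 \<le> t * real (M L)" using t by simp
  have "(t - s) * real N \<le> 1" using tN N1 by (simp add: field_simps)
  then have "(t - s) * real N * 2^L \<le> 2^L" by simp
  then have "t * real (M L) \<le> s * real (M L) + 2^L" unfolding M_def by (simp add: algebra_simps)
  moreover have "real b \<le> t * real (M L)" unfolding b_def using floor_facts(1)[OF t0] .
  moreover have "s * real (M L) < real a + 1" unfolding a_def using floor_facts(2)[OF s0] .
  ultimately have "real b < real (a + 1 + 2^L)" by simp
  then have "b < a + 1 + 2^L" by (simp only: of_nat_less_iff)
  then show "b - a \<le> 2^L" by linarith
qed

lemma exists_y_local:
  "\<exists>y. y 0 = y0 \<and> (\<forall>s t. s \<in> {0..1} \<longrightarrow> t \<in> {0..1} \<longrightarrow> s \<le> t \<longrightarrow> t - s \<le> 1 / real N \<longrightarrow>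
      maxabs (y t - y s) \<le> A * (t - s) powr \<alpha> \<and>
      maxabs (y t - y s - f (y s) *v (x t - x s)) \<le> B * (t - s) powr (2*\<alpha>))"
proof -
  obtain d where d: "strict_mono d" and cq: "\<forall>m. convergent (\<lambda>j. Y (d j) (rq m))"
    using ex_diag by blast
  define y where "y t = lim (\<lambda>j. Y (d j) t)" for t
  have Ylim: "(\<lambda>j. Y (d j) t) \<longlonglongrightarrow> y t" if "t \<in> {0..1}" for t
    unfolding y_def using conv_all[OF d cq that] by (simp add: convergent_LIMSEQ_iff)
  have "(\<lambda>j. Y (d j) 0) \<longlonglongrightarrow> y0" using Y_grid[of 0] by simp
  then have y00: "y 0 = y0" using Ylim[of 0] LIMSEQ_unique by auto
  have loc: "maxabs (y t - y s) \<le> A * (t - s) powr \<alpha> \<and>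
      maxabs (y t - y s - f (y s) *v (x t - x s)) \<le> B * (t - s) powr (2*\<alpha>)"
    if s: "s \<in> {0..1}" and t: "t \<in> {0..1}" and st: "s \<le> t" and tN: "t - s \<le> 1 / real N" for s t
  proof -
    define a where "a L = nat \<lfloor>s * real (M L)\<rfloor>" for L
    define b where "b L = nat \<lfloor>t * real (M L)\<rfloor>" for L
    have ab: "a L \<le> b L" "b L \<le> M L" "b L - a L \<le> 2^L" for L
      unfolding a_def b_def using pair_facts[OF s t st tN] by auto
    define Ta where "Ta j = tt (d j) (a (d j))" for j
    define Tb where "Tb j = tt (d j) (b (d j))" for j
    have Ta_lim: "Ta \<longlonglongrightarrow> s"
      using LIMSEQ_subseq_LIMSEQ[OF grid_lim[OF s] d] unfolding Ta_def a_def comp_def .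
    have Tb_lim: "Tb \<longlonglongrightarrow> t"
      using LIMSEQ_subseq_LIMSEQ[OF grid_lim[OF t] d] unfolding Tb_def b_def comp_def .
    have Ta01: "Ta j \<in> {0..1}" for j unfolding Ta_def using ab(1,2) by (intro tt_in) (meson order_trans)
    have Tb01: "Tb j \<in> {0..1}" for j unfolding Tb_def using ab(2) by (intro tt_in)
    have Tab: "0 \<le> Tb j - Ta j" for j unfolding Ta_def Tb_def using tt_mono[OF ab(1)] by simp
    have Ys: "Y (d j) s = eul (d j) (a (d j))" for j unfolding Y_grid[OF s] a_def ..
    have Yt: "Y (d j) t = eul (d j) (b (d j))" for j unfolding Y_grid[OF t] b_def ..
    have Dlim: "(\<lambda>j. Tb j - Ta j) \<longlonglongrightarrow> t - s" by (intro tendsto_diff Tb_lim Ta_lim)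
    have W1: "(\<lambda>j. A * (Tb j - Ta j) powr \<alpha>) \<longlonglongrightarrow> A * (t - s) powr \<alpha>"
      using Tab al0 by (intro tendsto_mult tendsto_const tendsto_powr' Dlim tendsto_const) auto
    have W2: "(\<lambda>j. B * (Tb j - Ta j) powr (2*\<alpha>)) \<longlonglongrightarrow> B * (t - s) powr (2*\<alpha>)"
      using Tab al0 by (intro tendsto_mult tendsto_const tendsto_powr' Dlim tendsto_const) auto
    have U1: "(\<lambda>j. Y (d j) t - Y (d j) s) \<longlonglongrightarrow> y t - y s" by (intro tendsto_diff Ylim s t)
    have U2: "(\<lambda>j. Y (d j) t - Y (d j) s - f (Y (d j) s) *v (x (Tb j) - x (Ta j)))
        \<longlonglongrightarrow> y t - y s - f (y s) *v (x t - x s)"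
      by (intro tendsto_diff fmv_tendsto Ylim s t x_seq Tb01 Ta01 Tb_lim Ta_lim)
    have b1: "maxabs (Y (d j) t - Y (d j) s) \<le> A * (Tb j - Ta j) powr \<alpha>" for j
      unfolding Ys Yt Ta_def Tb_def using ab by (intro E1)
    have b2: "maxabs (Y (d j) t - Y (d j) s - f (Y (d j) s) *v (x (Tb j) - x (Ta j))) \<le> B * (Tb j - Ta j) powr (2*\<alpha>)" for j
      unfolding Ys Yt Ta_def Tb_def using ab by (intro E2)
    show ?thesis using lim_maxabs_le[OF U1 W1 b1] lim_maxabs_le[OF U2 W2 b2] by simp
  qed
  show ?thesis using y00 loc by blast
qed



lemma N_pos: "0 < real N" using N1 by simp

lemma global_G1:
  assumes loc1: "\<And>s t. s \<in> {0..1} \<Longrightarrow> t \<in> {0..1} \<Longrightarrow> s \<le> t \<Longrightarrow> t - s \<le> 1 / real N \<Longrightarrow>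
                     maxabs (y t - y s) \<le> A * (t - s) powr \<alpha>"
    and s: "s \<in> {0..1}" and t: "t \<in> {0..1}" and st: "s \<le> t"
  shows "maxabs (y t - y s) \<le> A * real N powr (1 - \<alpha>) * (t - s) powr \<alpha>"
proof -
  define p where "p i = s + real i * (t - s) / real N" for i
  have p0: "p 0 = s" unfolding p_def by simp
  have pN: "p N = t" unfolding p_def using N_pos by simp
  have pin: "p i \<in> {0..1}" if "i \<le> N" for i
  proof -
    have "real i * (t - s) / real N \<le> real N * (t - s) / real N"
      using that st N_pos by (intro divide_right_mono mult_right_mono) auto
    then have "p i \<le> t" unfolding p_def using N_pos by simp
    moreover have "s \<le> p i" unfolding p_def using st N_pos by simp
    ultimately show ?thesis using s t by auto
  qed
  have pd: "p (Suc i) - p i = (t - s) / real N" for i unfolding p_def using N_pos by (simp add: field_simps)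
  have tele: "y t - y s = (\<Sum>i<N. y (p (Suc i)) - y (p i))"
    using sum_lessThan_telescope[of "\<lambda>i. y (p i)" N] unfolding p0 pN by simp
  have each: "maxabs (y (p (Suc i)) - y (p i)) \<le> A * ((t - s) / real N) powr \<alpha>" if "i < N" for i
  proof -
    have "(t - s) / real N \<le> 1 / real N" using s t N_pos by (intro divide_right_mono) auto
    moreover have "0 \<le> (t - s) / real N" using st N_pos by simp
    ultimately have h: "p i \<le> p (Suc i)" "p (Suc i) - p i \<le> 1 / real N" using pd[of i] by linarith+
    have "maxabs (y (p (Suc i)) - y (p i)) \<le> A * (p (Suc i) - p i) powr \<alpha>"
      using that by (intro loc1 pin h) auto
    then show ?thesis unfolding pd .
  qed
  have "maxabs (y t - y s) \<le> (\<Sum>i<N. maxabs (y (p (Suc i)) - y (p i)))" unfolding tele by (rule maxabs_sum)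
  also have "\<dots> \<le> (\<Sum>i<N. A * ((t - s) / real N) powr \<alpha>)" by (rule sum_mono) (use each in auto)
  also have "\<dots> = real N * A * ((t - s) / real N) powr \<alpha>" by simp
  also have "\<dots> = A * (real N / real N powr \<alpha>) * (t - s) powr \<alpha>"
    using st N_pos by (simp add: powr_divide)
  also have "\<dots> = A * real N powr (1 - \<alpha>) * (t - s) powr \<alpha>"
    using N_pos by (simp add: powr_diff)
  finally show ?thesis .
qed

lemma global_G2:
  assumes loc2: "\<And>s t. s \<in> {0..1} \<Longrightarrow> t \<in> {0..1} \<Longrightarrow> s \<le> t \<Longrightarrow> t - s \<le> 1 / real N \<Longrightarrow>
                     maxabs (y t - y s - f (y s) *v (x t - x s)) \<le> B * (t - s) powr (2*\<alpha>)"
    and hol: "\<And>u v. u \<in> {0..1} \<Longrightarrow> v \<in> {0..1} \<Longrightarrow> maxabs (y u - y v) \<le> G1 * \<bar>u - v\<bar> powr \<alpha>"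
    and G1: "0 \<le> G1"
    and s: "s \<in> {0..1}" and t: "t \<in> {0..1}" and st: "s < t"
  shows "maxabs (y t - y s - f (y s) *v (x t - x s)) \<le> hh * (dd * F1 * G1 * C * (t - s) powr (2*\<alpha>) * Z)"
proof -
  define D where "D = hh * (dd * F1 * G1 * C * (t - s) powr (2*\<alpha>) * Z)"
  define \<theta> where "\<theta> = y t - y s - f (y s) *v (x t - x s)"
  have bnd: "maxabs \<theta> \<le> D + B * (t - s) powr (2*\<alpha>) * real m powr (1 - 2*\<alpha>)" if mN: "N \<le> m" for m
  proof -
    have m0: "0 < real m" using mN N1 by simp
    define p where "p i = s + real i * (t - s) / real m" for i
    have p0: "p 0 = s" unfolding p_def by simp
    have pm: "p m = t" unfolding p_def using m0 by simp
    have pin: "p i \<in> {0..1}" if "i \<le> m" for i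
    proof -
      have "real i * (t - s) / real m \<le> real m * (t - s) / real m"
        using that st m0 by (intro divide_right_mono mult_right_mono) auto
      then have "p i \<le> t" unfolding p_def using m0 by simp
      moreover have "s \<le> p i" unfolding p_def using st m0 by simp
      ultimately show ?thesis using s t by auto
    qed
    have pd: "p (Suc i) - p i = (t - s) / real m" for i unfolding p_def using m0 by (simp add: field_simps)
    have inc: "\<forall>k<m. p k < p (Suc k)" using pd st m0 by (simp add: algebra_simps)
    have small: "(t - s) / real m \<le> 1 / real N"
    proof -
      have "(t - s) / real m \<le> 1 / real m" using s t m0 by (intro divide_right_mono) auto
      also have "\<dots> \<le> 1 / real N" using mN N_pos by (intro divide_left_mono) auto
      finally show ?thesis .
    qed
    define th where "th i = y (p (Suc i)) - y (p i) - f (y (p i)) *v (x (p (Suc i)) - x (p i))" for i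
    define R where "R = (\<Sum>k<m. f (y (p k)) *v (x (p (Suc k)) - x (p k))) - f (y (p 0)) *v (x (p m) - x (p 0))"
    have split: "\<theta> = (\<Sum>i<m. th i) + R"
    proof -
      have "(\<Sum>i<m. th i) = (\<Sum>i<m. y (p (Suc i)) - y (p i)) - (\<Sum>k<m. f (y (p k)) *v (x (p (Suc k)) - x (p k)))"
        unfolding th_def by (simp add: sum_subtractf)
      also have "\<dots> = y t - y s - (\<Sum>k<m. f (y (p k)) *v (x (p (Suc k)) - x (p k)))"
        using sum_lessThan_telescope[of "\<lambda>i. y (p i)" m] unfolding p0 pm by simp
      finally show ?thesis unfolding \<theta>_def R_def p0 pm by simp
    qed
    have Cg: "0 \<le> dd * F1 * G1" using dd1 F1pos G1 by simp
    have HG: "\<forall>a\<le>m. \<forall>b\<le>m. \<forall>i j. \<bar>f (y (p a)) $ i $ j - f (y (p b)) $ i $ j\<bar> \<le> (dd * F1 * G1) * \<bar>p a - p b\<bar> powr \<alpha>"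
    proof (intro allI impI)
      fix a b i j assume ab: "a \<le> m" "b \<le> m"
      have "\<bar>f (y (p a)) $ i $ j - f (y (p b)) $ i $ j\<bar> \<le> dd * F1 * maxabs (y (p a) - y (p b))" by (rule f_lip)
      also have "\<dots> \<le> dd * F1 * (G1 * \<bar>p a - p b\<bar> powr \<alpha>)"
        using dd1 F1pos ab by (intro mult_left_mono hol pin) auto
      finally show "\<bar>f (y (p a)) $ i $ j - f (y (p b)) $ i $ j\<bar> \<le> (dd * F1 * G1) * \<bar>p a - p b\<bar> powr \<alpha>" by simp
    qed
    have HX: "\<forall>a\<le>m. \<forall>b\<le>m. maxabs (x (p a) - x (p b)) \<le> C * \<bar>p a - p b\<bar> powr \<alpha>"
      using pin by (auto intro!: x_holder)
    have "maxabs R \<le> real CARD('h) * ((dd * F1 * G1) * C * (p m - p 0) powr (2*\<alpha>) * (\<Sum>k<m-1. 1 / real (Suc k) powr (2*\<alpha>)))"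
      unfolding R_def by (rule dyl_vec[OF al0 Cg _ inc HG HX]) (use Cpos in simp)
    also have "\<dots> \<le> D" unfolding D_def hh_def pm p0 using Cg Cpos dd1 F1pos G1
      by (intro mult_left_mono Zpartial mult_nonneg_nonneg) auto
    finally have Rb: "maxabs R \<le> D" .
    have thb: "maxabs (th i) \<le> B * ((t - s) / real m) powr (2*\<alpha>)" if "i < m" for i
    proof -
      have "0 \<le> (t - s) / real m" using st m0 by simp
      then have h: "p i \<le> p (Suc i)" "p (Suc i) - p i \<le> 1 / real N" using pd[of i] small by linarith+
      have "maxabs (th i) \<le> B * (p (Suc i) - p i) powr (2*\<alpha>)"
        unfolding th_def using that by (intro loc2 pin h) auto
      then show ?thesis unfolding pd .
    qed
    have "maxabs (\<Sum>i<m. th i) \<le> (\<Sum>i<m. maxabs (th i))" by (rule maxabs_sum)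
    also have "\<dots> \<le> (\<Sum>i<m. B * ((t - s) / real m) powr (2*\<alpha>))" by (rule sum_mono) (use thb in auto)
    also have "\<dots> = real m * B * ((t - s) / real m) powr (2*\<alpha>)" by simp
    also have "\<dots> = B * (t - s) powr (2*\<alpha>) * (real m / real m powr (2*\<alpha>))"
      using st m0 by (simp add: powr_divide)
    also have "\<dots> = B * (t - s) powr (2*\<alpha>) * real m powr (1 - 2*\<alpha>)"
      using m0 by (simp add: powr_diff)
    finally have Tb: "maxabs (\<Sum>i<m. th i) \<le> B * (t - s) powr (2*\<alpha>) * real m powr (1 - 2*\<alpha>)" .
    show ?thesis unfolding split using maxabs_triangle[of "\<Sum>i<m. th i" R] Rb Tb by linarith
  qed
  have "(\<lambda>m. real m powr (1 - 2*\<alpha>)) \<longlonglongrightarrow> 0"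
    using al1 by (intro tendsto_neg_powr filterlim_real_sequentially) auto
  then have "(\<lambda>m. D + B * (t - s) powr (2*\<alpha>) * real m powr (1 - 2*\<alpha>)) \<longlonglongrightarrow> D + B * (t - s) powr (2*\<alpha>) * 0"
    by (intro tendsto_intros)
  then have "maxabs \<theta> \<le> D + B * (t - s) powr (2*\<alpha>) * 0"
    by (rule LIMSEQ_le_const) (use bnd in blast)
  then show ?thesis unfolding \<theta>_def D_def by simp
qed


lemma young:
  assumes Gcb: "\<And>s t. s \<in> {0..1} \<Longrightarrow> t \<in> {0..1} \<Longrightarrow> s < t \<Longrightarrow>
                  maxabs (y t - y s - f (y s) *v (x t - x s)) \<le> Gc * (t - s) powr (2*\<alpha>)"
    and Gc: "0 \<le> Gc" and y00: "y 0 = y0" and t: "t \<in> {0..1}"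
  shows "has_young_integral (\<lambda>s. f (y s)) x 0 t (y t - y0)"
  unfolding has_young_integral_def
proof (intro allI impI)
  fix \<epsilon> :: real assume \<epsilon>: "0 < \<epsilon>"
  have e0: "0 < 2*\<alpha> - 1" using al1 by simp
  define z where "z = \<epsilon> / (Gc + 1)"
  have z0: "0 < z" unfolding z_def using \<epsilon> Gc by simp
  define \<delta> where "\<delta> = z powr (1 / (2*\<alpha> - 1))"
  have \<delta>0: "0 < \<delta>" unfolding \<delta>_def using z0 by simp
  have \<delta>e: "\<delta> powr (2*\<alpha> - 1) = z" unfolding \<delta>_def using z0 e0 by (simp add: powr_powr)
  show "\<exists>\<delta>>0. \<forall>n p. fine_partition 0 t \<delta> n p \<longrightarrow>
        maxabs ((\<Sum>i<n. f (y (p i)) *v (x (p (Suc i)) - x (p i))) - (y t - y0)) < \<epsilon>"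
  proof (intro exI conjI allI impI)
    show "0 < \<delta>" by (rule \<delta>0)
    fix n p assume fp: "fine_partition 0 t \<delta> n p"
    have p0: "p 0 = 0" and pn: "p n = t" and inc: "\<forall>i<n. p i < p (Suc i)"
      and dl: "\<forall>i<n. p (Suc i) - p i < \<delta>"
      using fp unfolding fine_partition_def by auto
    have pin: "p i \<in> {0..1}" if "i \<le> n" for i
      using part_mono[OF inc, of 0 i] part_mono[OF inc, of i n] that p0 pn t by auto
    define th where "th i = y (p (Suc i)) - y (p i) - f (y (p i)) *v (x (p (Suc i)) - x (p i))" for i
    have ident: "(\<Sum>i<n. f (y (p i)) *v (x (p (Suc i)) - x (p i))) - (y t - y0) = - (\<Sum>i<n. th i)"
    proof -
      have "(\<Sum>i<n. th i) = (\<Sum>i<n. y (p (Suc i)) - y (p i)) - (\<Sum>i<n. f (y (p i)) *v (x (p (Suc i)) - x (p i)))"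
        unfolding th_def by (simp add: sum_subtractf)
      also have "\<dots> = y t - y0 - (\<Sum>i<n. f (y (p i)) *v (x (p (Suc i)) - x (p i)))"
        using sum_lessThan_telescope[of "\<lambda>i. y (p i)" n] unfolding p0 pn y00 by simp
      finally show ?thesis by simp
    qed
    have thb: "maxabs (th i) \<le> Gc * z * (p (Suc i) - p i)" if i: "i < n" for i
    proof -
      define D where "D = p (Suc i) - p i"
      have D0: "0 < D" unfolding D_def using inc i by simp
      have Dd: "D < \<delta>" unfolding D_def using dl i by simp
      have "maxabs (th i) \<le> Gc * D powr (2*\<alpha>)"
        unfolding th_def D_def using i inc by (intro Gcb pin) auto
      also have "D powr (2*\<alpha>) = D * D powr (2*\<alpha> - 1)"
      proof -
        show ?thesis using powr_add[of D 1 "2*\<alpha> - 1"] D0 by simp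
      qed
      also have "D powr (2*\<alpha> - 1) \<le> \<delta> powr (2*\<alpha> - 1)"
        using D0 Dd e0 by (intro powr_mono2) auto
      then have "Gc * (D * D powr (2*\<alpha> - 1)) \<le> Gc * (D * z)"
        unfolding \<delta>e using Gc D0 by (intro mult_left_mono) auto
      finally show ?thesis unfolding D_def by (simp add: mult.assoc mult.commute mult.left_commute)
    qed
    have "maxabs ((\<Sum>i<n. f (y (p i)) *v (x (p (Suc i)) - x (p i))) - (y t - y0)) = maxabs (\<Sum>i<n. th i)"
      unfolding ident maxabs_uminus ..
    also have "\<dots> \<le> (\<Sum>i<n. maxabs (th i))" by (rule maxabs_sum)
    also have "\<dots> \<le> (\<Sum>i<n. Gc * z * (p (Suc i) - p i))" by (rule sum_mono) (use thb in auto)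
    also have "\<dots> = Gc * z * t"
      using sum_lessThan_telescope[of p n] unfolding p0 pn by (simp add: sum_distrib_left[symmetric])
    also have "\<dots> \<le> Gc * z" using t Gc z0 by (simp add: mult_left_le)
    also have "\<dots> < \<epsilon>" unfolding z_def using Gc \<epsilon> by (simp add: field_simps)
    finally show "maxabs ((\<Sum>i<n. f (y (p i)) *v (x (p (Suc i)) - x (p i))) - (y t - y0)) < \<epsilon>" .
  qed
qed

lemma final:
  "\<exists>y. (\<forall>t\<in>{0..1}. has_young_integral (\<lambda>s. f (y s)) x 0 t (y t - y0)) \<and>
     (\<forall>s t. 0 \<le> s \<and> s < t \<and> t \<le> 1 \<longrightarrow>
        maxabs (y s - y t) \<le> (A * real N powr (1 - \<alpha>)) * \<bar>s - t\<bar> powr \<alpha> \<and>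
        maxabs (y t - y s - f (y s) *v (x t - x s)) \<le> (dd * hh * (1 + Z) * F1 * C * (A * real N powr (1 - \<alpha>))) * \<bar>s - t\<bar> powr (2 * \<alpha>))"
proof -
  obtain y where y00: "y 0 = y0" and loc: "\<forall>s t. s \<in> {0..1} \<longrightarrow> t \<in> {0..1} \<longrightarrow> s \<le> t \<longrightarrow> t - s \<le> 1 / real N \<longrightarrow>
      maxabs (y t - y s) \<le> A * (t - s) powr \<alpha> \<and>
      maxabs (y t - y s - f (y s) *v (x t - x s)) \<le> B * (t - s) powr (2*\<alpha>)"
    using exists_y_local by blast
  define G1 where "G1 = A * real N powr (1 - \<alpha>)"
  define G2 where "G2 = dd * hh * (1 + Z) * F1 * C * G1"
  have G10: "0 \<le> G1" unfolding G1_def using A0 by simp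
  have G20: "0 \<le> G2" unfolding G2_def using dd1 hh1 Z0 F1pos Cpos G10 by simp
  have g1: "maxabs (y t - y s) \<le> G1 * (t - s) powr \<alpha>" if "s \<in> {0..1}" "t \<in> {0..1}" "s \<le> t" for s t
    unfolding G1_def by (rule global_G1) (use loc that in auto)
  have hol: "maxabs (y u - y v) \<le> G1 * \<bar>u - v\<bar> powr \<alpha>" if "u \<in> {0..1}" "v \<in> {0..1}" for u v
  proof (cases "v \<le> u")
    case True then show ?thesis using g1[of v u] that by simp
  next
    case False then show ?thesis using g1[of u v] that by (simp add: maxabs_commute abs_minus_commute)
  qed
  have g2: "maxabs (y t - y s - f (y s) *v (x t - x s)) \<le> G2 * (t - s) powr (2*\<alpha>)"
    if st: "s \<in> {0..1}" "t \<in> {0..1}" "s < t" for s t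
  proof -
    have "maxabs (y t - y s - f (y s) *v (x t - x s)) \<le> hh * (dd * F1 * G1 * C * (t - s) powr (2*\<alpha>) * Z)"
      by (rule global_G2[OF _ hol G10 st]) (use loc in auto)
    also have "\<dots> = (hh * dd * F1 * G1 * C * (t - s) powr (2*\<alpha>)) * Z" by (simp add: algebra_simps)
    also have "\<dots> \<le> (hh * dd * F1 * G1 * C * (t - s) powr (2*\<alpha>)) * (1 + Z)"
      using hh1 dd1 F1pos G10 Cpos by (intro mult_left_mono) auto
    also have "\<dots> = G2 * (t - s) powr (2*\<alpha>)" unfolding G2_def by (simp add: algebra_simps)
    finally show ?thesis .
  qed
  show ?thesis
  proof (intro exI conjI allI impI ballI)
    fix t :: real assume t01: "t \<in> {0..1}"
    show "has_young_integral (\<lambda>s. f (y s)) x 0 t (y t - y0)"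
      by (rule young[where y=y and Gc=G2 and t=t, OF _ G20 y00 t01]) (use g2 in auto)
  next
    fix s t :: real assume st: "0 \<le> s \<and> s < t \<and> t \<le> 1"
    show "maxabs (y s - y t) \<le> (A * real N powr (1 - \<alpha>)) * \<bar>s - t\<bar> powr \<alpha>"
      using hol[of s t] st unfolding G1_def by auto
    show "maxabs (y t - y s - f (y s) *v (x t - x s)) \<le> (dd * hh * (1 + Z) * F1 * C * (A * real N powr (1 - \<alpha>))) * \<bar>s - t\<bar> powr (2 * \<alpha>)"
      using g2[of s t] st unfolding G2_def G1_def by (simp add: abs_minus_commute)
  qed
qed

end

theorem lemma9:
  fixes x :: "real \<Rightarrow> real ^ 'h"
    and f :: "real ^ 'd \<Rightarrow> real ^ 'h ^ 'd"
    and Df :: "'d \<Rightarrow> 'h \<Rightarrow> real ^ 'd \<Rightarrow> real ^ 'd"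
    and D2f :: "'d \<Rightarrow> 'h \<Rightarrow> real ^ 'd \<Rightarrow> real ^ 'd ^ 'd"
    and y0 :: "real ^ 'd"
    and \<alpha> C\<^sub>\<alpha> :: real
  assumes alpha: "1/2 < \<alpha>" "\<alpha> \<le> 1"
    and Cpos: "0 < C\<^sub>\<alpha>"
    and holder: "\<forall>s\<in>{0..1}. \<forall>t\<in>{0..1}. maxabs (x t - x s) \<le> C\<^sub>\<alpha> * \<bar>t - s\<bar> powr \<alpha>"
    and D1: "\<forall>i j z. ((\<lambda>w. f w $ i $ j) has_derivative (\<lambda>v. Df i j z \<bullet> v)) (at z)"
    and D2: "\<forall>i j z. (Df i j has_derivative (\<lambda>v. D2f i j z *v v)) (at z)"
    and D2cont: "\<forall>i j. continuous_on UNIV (D2f i j)"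
    and bdd0: "bdd_above {\<bar>f z $ i $ j\<bar> | z i j. True}"
    and bdd1: "bdd_above {\<bar>Df i j z $ k\<bar> | z i j k. True}"
    and bdd2: "bdd_above {\<bar>D2f i j z $ k $ l\<bar> | z i j k l. True}"
  shows "let d = real CARD('d); h = real CARD('h);
             F0 = Sup {\<bar>f z $ i $ j\<bar> | z i j. True};
             F1 = Sup {\<bar>Df i j z $ k\<bar> | z i j k. True};
             K = Kconst (2 * \<alpha>);
             N = max 1 (nat \<lceil>(2 * d * h * C\<^sub>\<alpha> * K * F1) powr (1 / \<alpha>)\<rceil>);
             G1 = 2 * h * real N powr (1 - \<alpha>) * F0 * C\<^sub>\<alpha>;
             G2 = d * h * K * F1 * C\<^sub>\<alpha> * G1
         in \<exists>y :: real \<Rightarrow> real ^ 'd.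
              (\<forall>t\<in>{0..1}. has_young_integral (\<lambda>s. f (y s)) x 0 t (y t - y0)) \<and>
              (\<forall>s t. 0 \<le> s \<and> s < t \<and> t \<le> 1 \<longrightarrow>
                 maxabs (y s - y t) \<le> G1 * \<bar>s - t\<bar> powr \<alpha> \<and>
                 maxabs (y t - y s - f (y s) *v (x t - x s)) \<le> G2 * \<bar>s - t\<bar> powr (2 * \<alpha>))"
proof -
  define dd where "dd = real CARD('d)"
  define hh where "hh = real CARD('h)"
  define F0 where "F0 = Sup {\<bar>f z $ i $ j\<bar> | z i j. True}"
  define F1 where "F1 = Sup {\<bar>Df i j z $ k\<bar> | z i j k. True}"
  define Z where "Z = (\<Sum>n. 1 / real (Suc n) powr (2*\<alpha>))"
  define K where "K = Kconst (2 * \<alpha>)"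
  define N where "N = max 1 (nat \<lceil>(2 * dd * hh * C\<^sub>\<alpha> * K * F1) powr (1 / \<alpha>)\<rceil>)"
  define A where "A = 2 * hh * F0 * C\<^sub>\<alpha>"
  define B where "B = hh * Z * dd * F1 * A * C\<^sub>\<alpha>"
  have KZ: "K = 1 + Z" unfolding K_def Z_def Kconst_def ..
  have F0b: "\<forall>z i j. \<bar>f z $ i $ j\<bar> \<le> F0"
  proof (intro allI)
    fix z i j show "\<bar>f z $ i $ j\<bar> \<le> F0" unfolding F0_def by (rule cSup_upper[OF _ bdd0]) blast
  qed
  have F1b: "\<forall>z i j k. \<bar>Df i j z $ k\<bar> \<le> F1"
  proof (intro allI)
    fix z i j k show "\<bar>Df i j z $ k\<bar> \<le> F1" unfolding F1_def by (rule cSup_upper[OF _ bdd1]) blast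
  qed
  have F1p: "0 \<le> F1" using F1b by (meson abs_ge_zero order_trans)
  have al0: "0 < \<alpha>" using alpha by simp
  have Zs: "summable (\<lambda>n. 1 / real (Suc n) powr (2*\<alpha>))"
  proof -
    have "summable (\<lambda>n. real n powr (- (2*\<alpha>)))" using alpha by (subst summable_real_powr_iff) simp
    then have "summable (\<lambda>n. real (Suc n) powr (- (2*\<alpha>)))" by (subst summable_Suc_iff)
    then show ?thesis by (simp add: powr_minus_divide)
  qed
  have Z0: "0 \<le> Z" unfolding Z_def by (rule suminf_nonneg[OF Zs]) auto
  have dd1: "1 \<le> dd" unfolding dd_def by (simp add: Suc_leI)
  have hh1: "1 \<le> hh" unfolding hh_def by (simp add: Suc_leI)
  define Q where "Q = 2 * dd * hh * C\<^sub>\<alpha> * K * F1"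
  have Q0: "0 \<le> Q" unfolding Q_def KZ using dd1 hh1 Cpos Z0 F1p by simp
  have N1: "1 \<le> N" unfolding N_def by simp
  have Nbig: "2 * real CARD('d) * real CARD('h) * C\<^sub>\<alpha> * Z * F1 \<le> real N powr \<alpha>"
  proof -
    have "2 * real CARD('d) * real CARD('h) * C\<^sub>\<alpha> * Z * F1 = (2 * dd * hh * C\<^sub>\<alpha> * F1) * Z"
      unfolding dd_def hh_def by (simp add: algebra_simps)
    also have "\<dots> \<le> (2 * dd * hh * C\<^sub>\<alpha> * F1) * K"
      unfolding KZ using dd1 hh1 Cpos F1p by (intro mult_left_mono) auto
    also have "\<dots> = Q" unfolding Q_def by (simp add: algebra_simps)
    also have "\<dots> = (Q powr (1/\<alpha>)) powr \<alpha>" using Q0 al0 by (simp add: powr_powr)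
    also have "\<dots> \<le> real N powr \<alpha>"
    proof (rule powr_mono2)
      show "0 \<le> \<alpha>" using al0 by simp
      show "0 \<le> Q powr (1/\<alpha>)" by simp
      have "Q powr (1/\<alpha>) \<le> real (nat \<lceil>Q powr (1/\<alpha>)\<rceil>)" by (rule real_nat_ceiling_ge)
      also have "\<dots> \<le> real N" unfolding N_def Q_def by simp
      finally show "Q powr (1/\<alpha>) \<le> real N" .
    qed
    finally show ?thesis .
  qed
  interpret Y: ysetup x f Df y0 \<alpha> C\<^sub>\<alpha> F0 F1 Z dd hh A B N
    apply unfold_locales
    apply (fact alpha(1))
    apply (fact alpha(2))
    apply (fact Cpos)
    apply (fact holder)
    apply (fact D1)
    apply (fact F0b)
    apply (fact F1b)
    apply (fact Z_def)
    apply (fact N1)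
    apply (fact Nbig)
    apply (fact dd_def)
    apply (fact hh_def)
    apply (fact A_def)
    apply (fact B_def)
    done
  obtain y where y: "(\<forall>t\<in>{0..1}. has_young_integral (\<lambda>s. f (y s)) x 0 t (y t - y0)) \<and>
     (\<forall>s t. 0 \<le> s \<and> s < t \<and> t \<le> 1 \<longrightarrow>
        maxabs (y s - y t) \<le> (A * real N powr (1 - \<alpha>)) * \<bar>s - t\<bar> powr \<alpha> \<and>
        maxabs (y t - y s - f (y s) *v (x t - x s)) \<le> (dd * hh * (1 + Z) * F1 * C\<^sub>\<alpha> * (A * real N powr (1 - \<alpha>))) * \<bar>s - t\<bar> powr (2 * \<alpha>))"
    using Y.final by blast
  have e1: "A * real N powr (1 - \<alpha>) = 2 * hh * real N powr (1 - \<alpha>) * F0 * C\<^sub>\<alpha>"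
    unfolding A_def by (simp add: algebra_simps)
  have e2: "dd * hh * (1 + Z) * F1 * C\<^sub>\<alpha> * (A * real N powr (1 - \<alpha>)) =
      dd * hh * K * F1 * C\<^sub>\<alpha> * (2 * hh * real N powr (1 - \<alpha>) * F0 * C\<^sub>\<alpha>)"
    unfolding KZ e1 ..
  show ?thesis
    unfolding Let_def dd_def[symmetric] hh_def[symmetric] F0_def[symmetric] F1_def[symmetric]
      K_def[symmetric] N_def[symmetric]
    using y unfolding e1 KZ by (intro exI[of _ y])
qed


end
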